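(* Let $\mathfrak B$ and $\mathfrak H$ be Hopf algebras over a field $k$ and let $\wp:\mathfrak B\otimes\mathfrak H\to k$ be a convolution invertible skew pairing. Let $D=D(\mathfrak B,\mathfrak H)$ be the generalized quantum double. Then $D$ is coquasitriangular if and only if both $\mathfrak B$ and $\mathfrak H$ are coquasitriangular.
   Context: Sweedler notation $\Delta(h)=h_1\otimes h_2$ is used. A bilinear form $\langle\,,\rangle:U\otimes V\to k$ between bialgebras is a pairing if $\langle mn,x\rangle=\langle m,x_1\rangle\langle n,x_2\rangle$, $\langle m,xy\rangle=\langle m_1,x\rangle\langle m_2,y\rangle$, $\langle 1,x\rangle=\varepsilon(x)$, $\langle m,1\rangle=\varepsilon(m)$. A skew pairing $\wp:\mathfrak B\otimes\mathfrak H\to k$ is a pairing of $\mathfrak B^{\rm cop}$ and $\mathfrak H$, i.e. $\wp(bb',h)=\wp(b,h_1)\wp(b',h_2)$, $\wp(b,hh')=\wp(b_2,h)\wp(b_1,h')$, $\wp(1,h)=\varepsilon(h)$, $\wp(b,1)=\varepsilon(b)$. The generalized quantum double $D(\mathfrak B,\mathfrak H)$ is the vector space $\mathfrak B\otimes\mathfrak H$ with the tensor product coalgebra structure, unit $1\otimes 1$ and multiplication $(b\otimes h)(b'\otimes h')=\wp(b'_1,h_1)\wp^{-1}(b'_3,h_3)\,bb'_2\otimes h_2h'$, where $\wp^{-1}$ is the convolution inverse of $\wp$; it is a Hopf algebra. A Hopf algebra $H$ is coquasitriangular (CQT) if there is a convolution invertible bilinear map $\sigma:H\otimes H\to k$ with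 $\sigma(hh',g)=\sigma(h,g_1)\sigma(h',g_2)$, $\sigma(g,hh')=\sigma(g_2,h)\sigma(g_1,h')$, $\sigma(1,h)=\sigma(h,1)=\varepsilon(h)$ and $\sigma(h_1,h'_1)h_2h'_2=h'_1h_1\sigma(h_2,h'_2)$ for all $h,h',g\in H$. *)

theory Defs
  imports "HOL-Library.Poly_Mapping"
begin

text \<open>A k-vector space is represented by a basis: the space with basis indexed by
the type 'b is the space of finitely supported functions from b to k.
Tensor products of such spaces are the spaces on product index types.
All structure maps are given on basis vectors and extended (multi)linearly.\<close>

type_synonym ('b,'k) vec = "'b \<Rightarrow>\<^sub>0 'k"

definition bas :: "'b \<Rightarrow> ('b,'k::{zero,one}) vec" where
  "bas x = Poly_Mapping.single x 1"

definition smult :: "'k::semiring_0 \<Rightarrow> ('b,'k) vec \<Rightarrow> ('b,'k) vec" where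
  "smult c v = (\<Sum>a\<in>Poly_Mapping.keys v. Poly_Mapping.single a (c * Poly_Mapping.lookup v a))"

definition lext :: "('a \<Rightarrow> ('c,'k::semiring_0) vec) \<Rightarrow> ('a,'k) vec \<Rightarrow> ('c,'k) vec" where
  "lext f v = (\<Sum>a\<in>Poly_Mapping.keys v. smult (Poly_Mapping.lookup v a) (f a))"

definition lfun :: "('a \<Rightarrow> 'k::semiring_0) \<Rightarrow> ('a,'k) vec \<Rightarrow> 'k" where
  "lfun f v = (\<Sum>a\<in>Poly_Mapping.keys v. Poly_Mapping.lookup v a * f a)"

definition tens :: "('a,'k::semiring_0) vec \<Rightarrow> ('b,'k) vec \<Rightarrow> ('a \<times> 'b,'k) vec" where
  "tens v w = (\<Sum>a\<in>Poly_Mapping.keys v. \<Sum>b\<in>Poly_Mapping.keys w. Poly_Mapping.single (a,b) (Poly_Mapping.lookup v a * Poly_Mapping.lookup w b))"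

declare [[typedef_overloaded]]

record ('b,'k) bialg =
  mult   :: "'b \<Rightarrow> 'b \<Rightarrow> ('b,'k) vec"
  one    :: "('b,'k) vec"
  comult :: "'b \<Rightarrow> ('b \<times> 'b,'k) vec"
  counit :: "'b \<Rightarrow> 'k"

definition mulv :: "('b,'k::semiring_0) bialg \<Rightarrow> ('b,'k) vec \<Rightarrow> ('b,'k) vec \<Rightarrow> ('b,'k) vec" where
  "mulv A v w = lext (\<lambda>(a,b). mult A a b) (tens v w)"

definition comulv :: "('b,'k::semiring_0) bialg \<Rightarrow> ('b,'k) vec \<Rightarrow> ('b \<times> 'b,'k) vec" where
  "comulv A v = lext (comult A) v"

definition comult2 :: "('b,'k::semiring_1) bialg \<Rightarrow> 'b \<Rightarrow> (('b \<times> 'b) \<times> 'b,'k) vec" where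
  "comult2 A x = lext (\<lambda>(a,b). tens (comult A a) (bas b)) (comult A x)"

definition bialgebra :: "('b,'k::field) bialg \<Rightarrow> bool" where
  "bialgebra A \<longleftrightarrow>
     (\<forall>x y z. mulv A (mult A x y) (bas z) = mulv A (bas x) (mult A y z)) \<and>
     (\<forall>x. mulv A (one A) (bas x) = bas x \<and> mulv A (bas x) (one A) = bas x) \<and>
     (\<forall>x. lext (\<lambda>((a,b),c). bas (a,(b,c))) (comult2 A x)
          = lext (\<lambda>(a,b). tens (bas a) (comult A b)) (comult A x)) \<and>
     (\<forall>x. lext (\<lambda>(a,b). smult (counit A a) (bas b)) (comult A x) = bas x \<and>
          lext (\<lambda>(a,b). smult (counit A b) (bas a)) (comult A x) = bas x) \<and>
     (\<forall>x y. comulv A (mult A x y)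
          = lext (\<lambda>((a,b),(c,d)). tens (mult A a c) (mult A b d)) (tens (comult A x) (comult A y))) \<and>
     comulv A (one A) = tens (one A) (one A) \<and>
     (\<forall>x y. lfun (counit A) (mult A x y) = counit A x * counit A y) \<and>
     lfun (counit A) (one A) = 1"

definition is_antipode :: "('b,'k::field) bialg \<Rightarrow> ('b \<Rightarrow> ('b,'k) vec) \<Rightarrow> bool" where
  "is_antipode A S \<longleftrightarrow>
     (\<forall>x. lext (\<lambda>(a,b). mulv A (S a) (bas b)) (comult A x) = smult (counit A x) (one A) \<and>
          lext (\<lambda>(a,b). mulv A (bas a) (S b)) (comult A x) = smult (counit A x) (one A))"

definition hopf_algebra :: "('b,'k::field) bialg \<Rightarrow> bool" where
  "hopf_algebra A \<longleftrightarrow> bialgebra A \<and> (\<exists>S. is_antipode A S)"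

definition conv :: "('b,'k::field) bialg \<Rightarrow> ('c,'k) bialg \<Rightarrow>
    ('b \<Rightarrow> 'c \<Rightarrow> 'k) \<Rightarrow> ('b \<Rightarrow> 'c \<Rightarrow> 'k) \<Rightarrow> 'b \<Rightarrow> 'c \<Rightarrow> 'k" where
  "conv B H s t x y = lfun (\<lambda>((a,b),(c,d)). s a c * t b d) (tens (comult B x) (comult H y))"

definition conv_inverse :: "('b,'k::field) bialg \<Rightarrow> ('c,'k) bialg \<Rightarrow>
    ('b \<Rightarrow> 'c \<Rightarrow> 'k) \<Rightarrow> ('b \<Rightarrow> 'c \<Rightarrow> 'k) \<Rightarrow> bool" where
  "conv_inverse B H s t \<longleftrightarrow>
     (\<forall>x y. conv B H s t x y = counit B x * counit H y \<and> conv B H t s x y = counit B x * counit H y)"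

definition conv_invertible :: "('b,'k::field) bialg \<Rightarrow> ('c,'k) bialg \<Rightarrow>
    ('b \<Rightarrow> 'c \<Rightarrow> 'k) \<Rightarrow> bool" where
  "conv_invertible B H s \<longleftrightarrow> (\<exists>t. conv_inverse B H s t)"

definition skew_pairing :: "('b,'k::field) bialg \<Rightarrow> ('c,'k) bialg \<Rightarrow>
    ('b \<Rightarrow> 'c \<Rightarrow> 'k) \<Rightarrow> bool" where
  "skew_pairing B H p \<longleftrightarrow>
     (\<forall>x x' y. lfun (\<lambda>a. p a y) (mult B x x') = lfun (\<lambda>(c,d). p x c * p x' d) (comult H y)) \<and>
     (\<forall>x y y'. lfun (\<lambda>c. p x c) (mult H y y') = lfun (\<lambda>(a,b). p b y * p a y') (comult B x)) \<and>
     (\<forall>y. lfun (\<lambda>a. p a y) (one B) = counit H y) \<and>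
     (\<forall>x. lfun (\<lambda>c. p x c) (one H) = counit B x)"

definition cqt_form :: "('b,'k::field) bialg \<Rightarrow> ('b \<Rightarrow> 'b \<Rightarrow> 'k) \<Rightarrow> bool" where
  "cqt_form H s \<longleftrightarrow>
     conv_invertible H H s \<and>
     (\<forall>h h' g. lfun (\<lambda>a. s a g) (mult H h h') = lfun (\<lambda>(c,d). s h c * s h' d) (comult H g)) \<and>
     (\<forall>g h h'. lfun (\<lambda>c. s g c) (mult H h h') = lfun (\<lambda>(a,b). s b h * s a h') (comult H g)) \<and>
     (\<forall>h. lfun (\<lambda>a. s a h) (one H) = counit H h \<and> lfun (\<lambda>c. s h c) (one H) = counit H h) \<and>
     (\<forall>h h'. lext (\<lambda>((a,b),(c,d)). smult (s a c) (mult H b d)) (tens (comult H h) (comult H h'))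
           = lext (\<lambda>((a,b),(c,d)). smult (s b d) (mult H c a)) (tens (comult H h) (comult H h')))"

definition coquasitriangular :: "('b,'k::field) bialg \<Rightarrow> bool" where
  "coquasitriangular H \<longleftrightarrow> (\<exists>s. cqt_form H s)"

text \<open>The generalized quantum double D(B,H) on the basis type 'b \<times> 'c (the space B \<otimes> H),
 with tensor product coalgebra, unit 1 \<otimes> 1 and multiplication
 (b \<otimes> h)(b' \<otimes> h') = p(b'_1,h_1) q(b'_3,h_3) b b'_2 \<otimes> h_2 h', where q is the convolution inverse of p.\<close>
definition gen_double :: "('b,'k::field) bialg \<Rightarrow> ('c,'k) bialg \<Rightarrow>
    ('b \<Rightarrow> 'c \<Rightarrow> 'k) \<Rightarrow> ('b \<Rightarrow> 'c \<Rightarrow> 'k) \<Rightarrow> ('b \<times> 'c,'k) bialg" where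
  "gen_double B H p q =
    \<lparr> mult = (\<lambda>(x,y) (x',y').
        lext (\<lambda>(((a1,a2),a3),((c1,c2),c3)).
                smult (p a1 c1 * q a3 c3) (tens (mult B x a2) (mult H c2 y')))
             (tens (comult2 B x') (comult2 H y))),
      one = tens (one B) (one H),
      comult = (\<lambda>(x,y). lext (\<lambda>((a,b),(c,d)). bas ((a,c),(b,d))) (tens (comult B x) (comult H y))),
      counit = (\<lambda>(x,y). counit B x * counit H y) \<rparr>"

end

theory Submission
  imports Defs
begin

lemma lfun_eq_sum:
  assumes "finite S" "Poly_Mapping.keys v \<subseteq> S"
  shows "lfun f v = (\<Sum>a\<in>S. Poly_Mapping.lookup v a * f a)"
  unfolding lfun_def
  by (rule sum.mono_neutral_left) (use assms in \<open>auto simp: in_keys_iff\<close>)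

lemma lookup_smult [simp]: "Poly_Mapping.lookup (smult c v) z = c * Poly_Mapping.lookup v z"
  unfolding smult_def lookup_sum lookup_single
  by (cases "z \<in> Poly_Mapping.keys v") (auto simp: when_def in_keys_iff)

lemma keys_smult: "Poly_Mapping.keys (smult c v) \<subseteq> Poly_Mapping.keys v"
  by (auto simp: in_keys_iff)

lemma lfun_smult [simp]: "lfun (f::_\<Rightarrow>'k::comm_semiring_0) (smult c v) = c * lfun f v"
  by (subst lfun_eq_sum[OF _ keys_smult]) (auto simp: lfun_def sum_distrib_left ac_simps)

lemma lfun_add [simp]: "lfun f (v + w) = lfun f v + lfun f w"
proof -
  have "lfun f (v + w) = (\<Sum>a\<in>Poly_Mapping.keys v \<union> Poly_Mapping.keys w. Poly_Mapping.lookup (v+w) a * f a)"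
    by (rule lfun_eq_sum) (auto simp: in_keys_iff lookup_add)
  also have "\<dots> = (\<Sum>a\<in>Poly_Mapping.keys v \<union> Poly_Mapping.keys w. Poly_Mapping.lookup v a * f a) + (\<Sum>a\<in>Poly_Mapping.keys v \<union> Poly_Mapping.keys w. Poly_Mapping.lookup w a * f a)"
    by (simp add: lookup_add distrib_right sum.distrib)
  also have "\<dots> = lfun f v + lfun f w"
    by (subst (1 2) lfun_eq_sum[symmetric]) auto
  finally show ?thesis .
qed

lemma lfun_zero_vec [simp]: "lfun f 0 = 0"
  by (simp add: lfun_def)

lemma lfun_sum: "lfun f (sum g S) = (\<Sum>i\<in>S. lfun f (g i))"
  by (induction S rule: infinite_finite_induct) auto

lemma lfun_lext [simp]: "lfun (f::_\<Rightarrow>'k::comm_semiring_0) (lext g v) = lfun (\<lambda>a. lfun f (g a)) v"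
  by (simp add: lext_def lfun_sum) (simp add: lfun_def)

lemma lookup_bas: "Poly_Mapping.lookup (bas x) z = (if z = x then 1 else (0::'k::semiring_1))"
  by (simp add: bas_def lookup_single when_def)

lemma lfun_bas [simp]: "lfun f (bas x) = (f x::'k::semiring_1)"
  by (subst lfun_eq_sum[of "{x}"]) (auto simp: lookup_bas in_keys_iff split: if_splits)

lemma lookup_tens [simp]: "Poly_Mapping.lookup (tens v w) (a,b) = Poly_Mapping.lookup v a * Poly_Mapping.lookup w b"
proof -
  have "Poly_Mapping.lookup (tens v w) (a,b) = (\<Sum>x\<in>Poly_Mapping.keys v. \<Sum>y\<in>Poly_Mapping.keys w. (Poly_Mapping.lookup v x * Poly_Mapping.lookup w y when (x,y) = (a,b)))"
    by (simp add: tens_def lookup_sum lookup_single)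
  also have "\<dots> = (\<Sum>x\<in>Poly_Mapping.keys v. if x = a then (\<Sum>y\<in>Poly_Mapping.keys w. if y = b then Poly_Mapping.lookup v x * Poly_Mapping.lookup w y else 0) else 0)"
    by (rule sum.cong) (auto simp: when_def intro!: sum.cong)
  also have "\<dots> = Poly_Mapping.lookup v a * Poly_Mapping.lookup w b"
    by (simp add: sum.delta' in_keys_iff)
  finally show ?thesis .
qed

lemma keys_tens: "Poly_Mapping.keys (tens v w) \<subseteq> Poly_Mapping.keys v \<times> Poly_Mapping.keys w"
proof
  fix x assume "x \<in> Poly_Mapping.keys (tens v w)"
  then show "x \<in> Poly_Mapping.keys v \<times> Poly_Mapping.keys w"
    by (cases x) (auto simp: in_keys_iff)
qed

lemma lfun_tens [simp]: "lfun (f::_\<Rightarrow>'k::comm_semiring_0) (tens v w) = lfun (\<lambda>a. lfun (\<lambda>b. f (a,b)) w) v"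
proof -
  have "lfun f (tens v w) = (\<Sum>p\<in>Poly_Mapping.keys v \<times> Poly_Mapping.keys w. Poly_Mapping.lookup (tens v w) p * f p)"
    by (rule lfun_eq_sum) (auto simp: keys_tens)
  also have "\<dots> = (\<Sum>(a,b)\<in>Poly_Mapping.keys v \<times> Poly_Mapping.keys w. Poly_Mapping.lookup v a * (Poly_Mapping.lookup w b * f (a,b)))"
    by (rule sum.cong) (auto simp: mult.assoc)
  also have "\<dots> = (\<Sum>a\<in>Poly_Mapping.keys v. \<Sum>b\<in>Poly_Mapping.keys w. Poly_Mapping.lookup v a * (Poly_Mapping.lookup w b * f (a,b)))"
    by (simp add: sum.cartesian_product)
  also have "\<dots> = lfun (\<lambda>a. lfun (\<lambda>b. f (a,b)) w) v"
    by (simp add: lfun_def sum_distrib_left)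
  finally show ?thesis .
qed

lemma lfun_cmult_left [simp]: "lfun (\<lambda>a. (c::'k::comm_semiring_0) * f a) v = c * lfun f v"
  by (simp add: lfun_def sum_distrib_left ac_simps)

lemma lfun_cmult_right [simp]: "lfun (\<lambda>a. f a * (c::'k::comm_semiring_0)) v = lfun f v * c"
  by (simp add: lfun_def sum_distrib_right ac_simps)

lemma lfun_plus_fun: "lfun (\<lambda>a. f a + g a) v = lfun f v + lfun g v"
  by (simp add: lfun_def distrib_left sum.distrib)

lemma lfun_zero_fun [simp]: "lfun (\<lambda>a. 0) v = 0"
  by (simp add: lfun_def)

lemma lfun_swap: "lfun (\<lambda>a. lfun (\<lambda>b. (f a b::'k::comm_semiring_0)) w) v = lfun (\<lambda>b. lfun (\<lambda>a. f a b) v) w"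
  by (simp add: lfun_def sum_distrib_left sum_distrib_right ac_simps sum.swap[of _ "Poly_Mapping.keys v"])

lemma lookup_as_lfun: "Poly_Mapping.lookup (v::_\<Rightarrow>\<^sub>0'k::semiring_1) z = lfun (\<lambda>a. if a = z then 1 else 0) v"
proof -
  have "lfun (\<lambda>a. if a = z then 1 else 0) v = (\<Sum>a\<in>Poly_Mapping.keys v \<union> {z}. if a = z then Poly_Mapping.lookup v a else 0)"
    by (subst lfun_eq_sum[of "Poly_Mapping.keys v \<union> {z}"]; (rule sum.cong)?; auto)
  also have "\<dots> = Poly_Mapping.lookup v z"
    by (subst sum.delta) auto
  finally show ?thesis by simp
qed

lemma vec_eqI: "(\<And>f. lfun f (v::_\<Rightarrow>\<^sub>0'k::semiring_1) = lfun f w) \<Longrightarrow> v = w"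
  by (rule poly_mapping_eqI) (simp add: lookup_as_lfun)

lemma lfun_mulv [simp]: "lfun (f::_\<Rightarrow>'k::field) (mulv A v w) = lfun (\<lambda>a. lfun (\<lambda>b. lfun f (mult A a b)) w) v"
  by (simp add: mulv_def case_prod_beta)

lemma lfun_comulv [simp]: "lfun (f::_\<Rightarrow>'k::field) (comulv A v) = lfun (\<lambda>a. lfun f (comult A a)) v"
  by (simp add: comulv_def)

lemma lfun_comult2 [simp]: "lfun (f::_\<Rightarrow>'k::field) (comult2 A x) = lfun (\<lambda>(a,b). lfun (\<lambda>c. f (c, b)) (comult A a)) (comult A x)"
  by (simp add: comult2_def case_prod_unfold)


definition cmv :: "('x \<Rightarrow> ('x\<times>'x,'k::field) vec) \<Rightarrow> 'x \<Rightarrow> ('x \<Rightarrow> 'x \<Rightarrow> 'k) \<Rightarrow> 'k" where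
  "cmv V x F = lfun (\<lambda>(a,b). F a b) (V x)"
abbreviation cm :: "('b,'k::field) bialg \<Rightarrow> 'b \<Rightarrow> ('b \<Rightarrow> 'b \<Rightarrow> 'k) \<Rightarrow> 'k" where
  "cm A \<equiv> cmv (comult A)"
lemmas cm_def = cmv_def
definition mu :: "('b,'k::field) bialg \<Rightarrow> 'b \<Rightarrow> 'b \<Rightarrow> ('b \<Rightarrow> 'k) \<Rightarrow> 'k" where
  "mu A x y f = lfun f (mult A x y)"
definition un :: "('b,'k::field) bialg \<Rightarrow> ('b \<Rightarrow> 'k) \<Rightarrow> 'k" where
  "un A f = lfun f (one A)"

lemma lfun_case_cL [simp]: "lfun (\<lambda>(a,b). (c::'k::field) * F a b) v = c * lfun (\<lambda>(a,b). F a b) v"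
  using lfun_cmult_left[of c "\<lambda>(a,b). F a b" v] by (simp add: case_prod_unfold)
lemma lfun_case_cR [simp]: "lfun (\<lambda>(a,b). F a b * (c::'k::field)) v = lfun (\<lambda>(a,b). F a b) v * c"
  using lfun_cmult_right[of "\<lambda>(a,b). F a b" c v] by (simp add: case_prod_unfold)

lemma cm_cL [simp]: "cmv A x (\<lambda>a b. c * F a b) = c * cmv A x F" by (simp add: cm_def)
lemma cm_cR [simp]: "cmv A x (\<lambda>a b. F a b * c) = cmv A x F * c" by (simp add: cm_def)
lemma mu_cL [simp]: "mu A x y (\<lambda>a. c * f a) = c * mu A x y f" by (simp add: mu_def)
lemma mu_cR [simp]: "mu A x y (\<lambda>a. f a * c) = mu A x y f * c" by (simp add: mu_def)
lemma un_cL [simp]: "un A (\<lambda>a. c * f a) = c * un A f" by (simp add: un_def)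
lemma un_cR [simp]: "un A (\<lambda>a. f a * c) = un A f * c" by (simp add: un_def)

lemma lfun_swap': "lfun (\<lambda>a. lfun (f a) w) v = lfun (\<lambda>b. lfun (\<lambda>a. f a b) v) (w::_ \<Rightarrow>\<^sub>0 'k::field)"
  using lfun_swap[of f w v] by simp

lemma cm_cm_swap: "cmv A x (\<lambda>a b. cmv C y (F a b)) = cmv C y (\<lambda>c d. cmv A x (\<lambda>a b. F a b c d))"
  unfolding cm_def case_prod_unfold by (rule lfun_swap')
lemma cm_mu_swap: "cmv A x (\<lambda>a b. mu C y z (F a b)) = mu C y z (\<lambda>c. cmv A x (\<lambda>a b. F a b c))"
  unfolding cm_def mu_def case_prod_unfold by (rule lfun_swap')
lemma cm_un_swap: "cmv A x (\<lambda>a b. un C (F a b)) = un C (\<lambda>c. cmv A x (\<lambda>a b. F a b c))"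
  unfolding cm_def un_def case_prod_unfold by (rule lfun_swap')
lemma mu_mu_swap: "mu A x y (\<lambda>a. mu C z w (F a)) = mu C z w (\<lambda>c. mu A x y (\<lambda>a. F a c))"
  unfolding mu_def by (rule lfun_swap')
lemma mu_un_swap: "mu A x y (\<lambda>a. un C (F a)) = un C (\<lambda>c. mu A x y (\<lambda>a. F a c))"
  unfolding mu_def un_def by (rule lfun_swap')
lemma un_un_swap: "un A (\<lambda>a. un C (F a)) = un C (\<lambda>c. un A (\<lambda>a. F a c))"
  unfolding un_def by (rule lfun_swap')

lemma cm_inL: "c * cmv A x F = cmv A x (\<lambda>a b. c * F a b)" by simp
lemma cm_inR: "cmv A x F * c = cmv A x (\<lambda>a b. F a b * c)" by simp
lemmas cm_in = cm_inL cm_inR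

lemma cm_cong: "(\<And>a b. F a b = G a b) \<Longrightarrow> cmv A x F = cmv A x G"
  by (metis ext)

context
  fixes A :: "('b,'k::field) bialg"
  assumes bA: "bialgebra A"
begin

lemma coassoc: "cm A x (\<lambda>a b. cm A a (\<lambda>c d. F c d b)) = cm A x (\<lambda>a b. cm A b (\<lambda>c d. F a c d))"
proof -
  have "lext (\<lambda>((a,b),c). bas (a,(b,c))) (comult2 A x) = lext (\<lambda>(a,b). tens (bas a) (comult A b)) (comult A x)"
    using bA by (simp add: bialgebra_def)
  then have "lfun (\<lambda>(a,b,c). F a b c) (lext (\<lambda>((a,b),c). bas (a,(b,c))) (comult2 A x)) =
             lfun (\<lambda>(a,b,c). F a b c) (lext (\<lambda>(a,b). tens (bas a) (comult A b)) (comult A x))"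
    by simp
  then show ?thesis
    by (simp add: cm_def case_prod_unfold)
qed

lemma counitL [simp]: "cm A x (\<lambda>a b. counit A a * f b) = f x"
proof -
  have "lext (\<lambda>(a,b). smult (counit A a) (bas b)) (comult A x) = bas x"
    using bA by (simp add: bialgebra_def)
  then have "lfun f (lext (\<lambda>(a,b). smult (counit A a) (bas b)) (comult A x)) = lfun f (bas x)" by simp
  then show ?thesis by (simp add: cm_def case_prod_unfold)
qed

lemma counitR [simp]: "cm A x (\<lambda>a b. f a * counit A b) = f x"
proof -
  have "lext (\<lambda>(a,b). smult (counit A b) (bas a)) (comult A x) = bas x"
    using bA by (simp add: bialgebra_def)
  then have "lfun f (lext (\<lambda>(a,b). smult (counit A b) (bas a)) (comult A x)) = lfun f (bas x)" by simp
  then show ?thesis by (simp add: cm_def case_prod_unfold mult.commute)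
qed

lemma counitL2 [simp]: "cm A x (\<lambda>a b. f b * counit A a) = f x"
  using counitL[of x f] by (simp add: mult.commute)
lemma counitR2 [simp]: "cm A x (\<lambda>a b. counit A b * f a) = f x"
  using counitR[of x f] by (simp add: mult.commute)

lemma counitL' [simp]: "cm A x (\<lambda>a b. counit A a) = 1"
  using counitL[of x "\<lambda>b. 1"] by simp
lemma counitR' [simp]: "cm A x (\<lambda>a b. counit A b) = 1"
  using counitR[of x "\<lambda>b. 1"] by simp

lemma massoc: "mu A x y (\<lambda>a. mu A a z f) = mu A y z (\<lambda>a. mu A x a f)"
proof -
  have "mulv A (mult A x y) (bas z) = mulv A (bas x) (mult A y z)"
    using bA by (simp add: bialgebra_def)
  then have "lfun f (mulv A (mult A x y) (bas z)) = lfun f (mulv A (bas x) (mult A y z))" by simp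
  then show ?thesis by (simp add: mu_def)
qed

lemma unitL [simp]: "un A (\<lambda>a. mu A a x f) = f x"
proof -
  have "mulv A (one A) (bas x) = bas x"
    using bA by (simp add: bialgebra_def)
  then have "lfun f (mulv A (one A) (bas x)) = lfun f (bas x)" by simp
  then show ?thesis by (simp add: mu_def un_def)
qed

lemma unitR [simp]: "un A (\<lambda>a. mu A x a f) = f x"
proof -
  have "mulv A (bas x) (one A) = bas x"
    using bA by (simp add: bialgebra_def)
  then have "lfun f (mulv A (bas x) (one A)) = lfun f (bas x)" by simp
  then show ?thesis by (simp add: mu_def un_def)
qed

lemma comult_mult: "mu A x y (\<lambda>e. cm A e F) = cm A x (\<lambda>a b. cm A y (\<lambda>c d. mu A a c (\<lambda>e. mu A b d (\<lambda>g. F e g))))"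
proof -
  have "comulv A (mult A x y) = lext (\<lambda>((a,b),(c,d)). tens (mult A a c) (mult A b d)) (tens (comult A x) (comult A y))"
    using bA by (simp add: bialgebra_def)
  then have "lfun (\<lambda>(a,b). F a b) (comulv A (mult A x y)) = lfun (\<lambda>(a,b). F a b) (lext (\<lambda>((a,b),(c,d)). tens (mult A a c) (mult A b d)) (tens (comult A x) (comult A y)))" by simp
  then show ?thesis by (simp add: mu_def cm_def case_prod_unfold)
qed

lemma comult_one: "un A (\<lambda>e. cm A e F) = un A (\<lambda>a. un A (\<lambda>b. F a b))"
proof -
  have "comulv A (one A) = tens (one A) (one A)"
    using bA by (simp add: bialgebra_def)
  then have "lfun (\<lambda>(a,b). F a b) (comulv A (one A)) = lfun (\<lambda>(a,b). F a b) (tens (one A) (one A))" by simp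
  then show ?thesis by (simp add: un_def cm_def case_prod_unfold)
qed

lemma counit_mult [simp]: "mu A x y (counit A) = counit A x * counit A y"
  using bA by (simp add: bialgebra_def mu_def)

lemma counit_one [simp]: "un A (counit A) = 1"
  using bA by (simp add: bialgebra_def un_def)

end


locale coalg =
  fixes V :: "'x \<Rightarrow> ('x \<times> 'x, 'k::field) vec" and e :: "'x \<Rightarrow> 'k"
  assumes coassoc: "cmv V x (\<lambda>a b. cmv V a (\<lambda>c d. F c d b)) = cmv V x (\<lambda>a b. cmv V b (\<lambda>c d. F a c d))"
    and counitL: "cmv V x (\<lambda>a b. e a * f b) = f x"
    and counitR: "cmv V x (\<lambda>a b. f a * e b) = f x"
begin

lemma A4: "cmv V x (\<lambda>x1 x2. cmv V x1 (\<lambda>a b. cmv V x2 (\<lambda>c d. F a b c d)))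
         = cmv V x (\<lambda>a r. cmv V r (\<lambda>m d. cmv V m (\<lambda>b c. F a b c d)))"
proof -
  have "cmv V x (\<lambda>x1 x2. cmv V x1 (\<lambda>a b. cmv V x2 (\<lambda>c d. F a b c d)))
      = cmv V x (\<lambda>a r. cmv V r (\<lambda>b x2. cmv V x2 (\<lambda>c d. F a b c d)))"
    by (rule coassoc)
  also have "\<dots> = cmv V x (\<lambda>a r. cmv V r (\<lambda>m d. cmv V m (\<lambda>b c. F a b c d)))"
    by (rule cm_cong, rule coassoc[symmetric])
  finally show ?thesis .
qed

lemma swap_split: "cmv V x (\<lambda>a b. cmv V b (\<lambda>c d. cmv V a (\<lambda>e f. G e f c d))) = cmv V x (\<lambda>a b. cmv V a (\<lambda>e f. cmv V b (\<lambda>c d. G e f c d)))"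
  by (rule cm_cong) (rule cm_cm_swap)

lemma G1: "cmv V x (\<lambda>a a3. cmv V a (\<lambda>a1 a2. cmv V a2 (\<lambda>b1 b2. F a1 b1 b2 a3)))
        = cmv V x (\<lambda>X X'. cmv V X (\<lambda>a1 b1. cmv V X' (\<lambda>b2 a3. F a1 b1 b2 a3)))"
  by (simp only: coassoc)

end

definition convf :: "('x \<Rightarrow> ('x \<times> 'x, 'k::field) vec) \<Rightarrow> ('x \<Rightarrow> 'k) \<Rightarrow> ('x \<Rightarrow> 'k) \<Rightarrow> 'x \<Rightarrow> 'k" where
  "convf V f g x = cmv V x (\<lambda>a b. f a * g b)"

context coalg
begin

lemma conv_assoc: "convf V (convf V f g) h x = convf V f (convf V g h) x"
proof -
  have "convf V (convf V f g) h x = cmv V x (\<lambda>a b. cmv V a (\<lambda>c d. f c * g d * h b))"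
    by (simp add: convf_def)
  also have "\<dots> = cmv V x (\<lambda>a b. cmv V b (\<lambda>c d. f a * g c * h d))"
    by (rule coassoc)
  also have "\<dots> = convf V f (convf V g h) x"
    by (simp add: convf_def mult.assoc)
  finally show ?thesis .
qed

lemma conv_unitR: "convf V f e x = f x"
  by (simp add: convf_def counitR)
lemma conv_unitL: "convf V e f x = f x"
  by (simp add: convf_def counitL)

lemma inv_unique:
  assumes "\<And>x. convf V f g x = e x" "\<And>x. convf V h f x = e x"
  shows "h x = g x"
proof -
  have "h x = convf V h e x" by (simp add: conv_unitR)
  also have "\<dots> = convf V h (convf V f g) x"
    using assms(1) by (simp add: convf_def)
  also have "\<dots> = convf V (convf V h f) g x" by (simp add: conv_assoc)
  also have "\<dots> = g x" using assms(2) by (simp add: counitL convf_def)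
  finally show ?thesis .
qed

end

lemma coalg_bialg: "bialgebra A \<Longrightarrow> coalg (comult A) (counit A)"
  by unfold_locales (simp_all add: coassoc)

definition tensV :: "('x \<Rightarrow> ('x \<times> 'x, 'k::field) vec) \<Rightarrow> ('y \<Rightarrow> ('y \<times> 'y, 'k) vec) \<Rightarrow> ('x \<times> 'y) \<Rightarrow> (('x \<times> 'y) \<times> ('x \<times> 'y), 'k) vec" where
  "tensV V1 V2 = (\<lambda>(x,y). lext (\<lambda>((a,b),(c,d)). bas ((a,c),(b,d))) (tens (V1 x) (V2 y)))"

lemma cmv_tensV [simp]: "cmv (tensV V1 V2) (x,y) F = cmv V1 x (\<lambda>a b. cmv V2 y (\<lambda>c d. F (a,c) (b,d)))"
  by (simp add: tensV_def cmv_def case_prod_unfold)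

lemma cmv_tensV': "cmv (tensV V1 V2) z F = cmv V1 (fst z) (\<lambda>a b. cmv V2 (snd z) (\<lambda>c d. F (a,c) (b,d)))"
  by (cases z) simp

lemma tens_coassoc:
  assumes c1: "coalg V1 e1" and c2: "coalg V2 e2"
  shows "cmv (tensV V1 V2) (x,y) (\<lambda>a b. cmv (tensV V1 V2) a (\<lambda>c d. F c d b)) =
         cmv (tensV V1 V2) (x,y) (\<lambda>a b. cmv (tensV V1 V2) b (\<lambda>c d. F a c d))"
proof -
  have "cmv (tensV V1 V2) (x,y) (\<lambda>a b. cmv (tensV V1 V2) a (\<lambda>c d. F c d b))
     = cmv V1 x (\<lambda>a b. cmv V2 y (\<lambda>c d. cmv V1 a (\<lambda>a1 a2. cmv V2 c (\<lambda>c1 c2. F (a1,c1) (a2,c2) (b,d)))))"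
    by simp
  also have "\<dots> = cmv V1 x (\<lambda>a b. cmv V1 a (\<lambda>a1 a2. cmv V2 y (\<lambda>c d. cmv V2 c (\<lambda>c1 c2. F (a1,c1) (a2,c2) (b,d)))))"
    by (rule cm_cong, rule cm_cm_swap)
  also have "\<dots> = cmv V1 x (\<lambda>a b. cmv V1 a (\<lambda>a1 a2. cmv V2 y (\<lambda>c d. cmv V2 d (\<lambda>c1 c2. F (a1,c) (a2,c1) (b,c2)))))"
    by (intro cm_cong coalg.coassoc[OF c2])
  also have "\<dots> = cmv V1 x (\<lambda>a b. cmv V1 b (\<lambda>a1 a2. cmv V2 y (\<lambda>c d. cmv V2 d (\<lambda>c1 c2. F (a,c) (a1,c1) (a2,c2)))))"
    by (rule coalg.coassoc[OF c1])
  also have "\<dots> = cmv V1 x (\<lambda>a b. cmv V2 y (\<lambda>c d. cmv V1 b (\<lambda>a1 a2. cmv V2 d (\<lambda>c1 c2. F (a,c) (a1,c1) (a2,c2)))))"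
    by (rule cm_cong, rule cm_cm_swap[symmetric])
  also have "\<dots> = cmv (tensV V1 V2) (x,y) (\<lambda>a b. cmv (tensV V1 V2) b (\<lambda>c d. F a c d))"
    by simp
  finally show ?thesis .
qed

lemma coalg_tens:
  assumes c1: "coalg V1 e1" and c2: "coalg V2 e2"
  shows "coalg (tensV V1 V2) (\<lambda>(x,y). e1 x * e2 y)"
proof
  fix z F
  show "cmv (tensV V1 V2) z (\<lambda>a b. cmv (tensV V1 V2) a (\<lambda>c d. F c d b)) =
                cmv (tensV V1 V2) z (\<lambda>a b. cmv (tensV V1 V2) b (\<lambda>c d. F a c d))"
    by (cases z) (simp only: tens_coassoc[OF c1 c2])
next
  fix z f
  show "cmv (tensV V1 V2) z (\<lambda>a b. (case a of (x, y) \<Rightarrow> e1 x * e2 y) * f b) = f z"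
    by (cases z) (simp add: mult.assoc coalg.counitL[OF c1] coalg.counitL[OF c2])
next
  fix z f
  show "cmv (tensV V1 V2) z (\<lambda>a b. f a * (case b of (x, y) \<Rightarrow> e1 x * e2 y)) = f z"
    by (cases z) (simp add: mult.assoc[symmetric] coalg.counitR[OF c1] coalg.counitR[OF c2])
qed


locale pq =
  fixes B :: "('b,'k::field) bialg" and H :: "('c,'k) bialg"
    and p q :: "'b \<Rightarrow> 'c \<Rightarrow> 'k"
  assumes bB: "bialgebra B" and bH: "bialgebra H"
    and sp: "skew_pairing B H p"
    and ci: "conv_inverse B H p q"
begin

lemma SP1: "mu B x x' (\<lambda>a. p a y) = cm H y (\<lambda>c d. p x c * p x' d)"
  using sp by (simp add: skew_pairing_def mu_def cm_def case_prod_unfold)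
lemma SP2: "mu H y y' (\<lambda>c. p x c) = cm B x (\<lambda>a b. p b y * p a y')"
  using sp by (simp add: skew_pairing_def mu_def cm_def case_prod_unfold)
lemma SP3 [simp]: "un B (\<lambda>a. p a y) = counit H y"
  using sp by (simp add: skew_pairing_def un_def)
lemma SP4 [simp]: "un H (\<lambda>c. p x c) = counit B x"
  using sp by (simp add: skew_pairing_def un_def)
lemma SP3' [simp]: "un B (\<lambda>a. p a y * f) = counit H y * f"
  by simp
lemma SP4' [simp]: "un H (\<lambda>c. p x c * f) = counit B x * f"
  by simp

lemma CI1: "cm B x (\<lambda>a b. cm H y (\<lambda>c d. p a c * q b d)) = counit B x * counit H y"
  using ci by (simp add: conv_inverse_def conv_def cm_def case_prod_unfold)
lemma CI2: "cm B x (\<lambda>a b. cm H y (\<lambda>c d. q a c * p b d)) = counit B x * counit H y"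
  using ci by (simp add: conv_inverse_def conv_def cm_def case_prod_unfold)

lemma CI1': "cm B x (\<lambda>a b. cm H y (\<lambda>c d. q b d * p a c)) = counit B x * counit H y"
  using CI1[of x y] by (simp add: mult.commute)
lemma CI2': "cm B x (\<lambda>a b. cm H y (\<lambda>c d. p b d * q a c)) = counit B x * counit H y"
  using CI2[of x y] by (simp add: mult.commute)

lemma Q1 [simp]: "un H (\<lambda>c. q x c) = counit B x"
proof -
  have "un H (\<lambda>y. cm B x (\<lambda>a b. cm H y (\<lambda>c d. p a c * q b d))) = un H (\<lambda>y. counit B x * counit H y)"
    by (simp add: CI1)
  also have "\<dots> = counit B x" using bH by simp
  finally have e: "un H (\<lambda>y. cm B x (\<lambda>a b. cm H y (\<lambda>c d. p a c * q b d))) = counit B x" .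
  have "un H (\<lambda>y. cm B x (\<lambda>a b. cm H y (\<lambda>c d. p a c * q b d))) = cm B x (\<lambda>a b. un H (\<lambda>y. cm H y (\<lambda>c d. p a c * q b d)))"
    by (simp add: cm_un_swap)
  also have "\<dots> = cm B x (\<lambda>a b. counit B a * un H (\<lambda>c. q b c))"
    using bH by (simp add: comult_one)
  also have "\<dots> = un H (\<lambda>c. q x c)"
    using bB by simp
  finally show ?thesis using e by simp
qed

lemma Q2 [simp]: "un B (\<lambda>a. q a y) = counit H y"
proof -
  have "un B (\<lambda>x. cm B x (\<lambda>a b. cm H y (\<lambda>c d. p a c * q b d))) = un B (\<lambda>x. counit B x * counit H y)"
    by (simp add: CI1)
  also have "\<dots> = counit H y" using bB by simp
  finally have e: "un B (\<lambda>x. cm B x (\<lambda>a b. cm H y (\<lambda>c d. p a c * q b d))) = counit H y" .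
  have "un B (\<lambda>x. cm B x (\<lambda>a b. cm H y (\<lambda>c d. p a c * q b d))) = un B (\<lambda>a. un B (\<lambda>b. cm H y (\<lambda>c d. p a c * q b d)))"
    using bB by (simp add: comult_one)
  also have "\<dots> = cm H y (\<lambda>c d. un B (\<lambda>a. un B (\<lambda>b. p a c * q b d)))"
    by (simp only: cm_un_swap)
  also have "\<dots> = cm H y (\<lambda>c d. counit H c * un B (\<lambda>b. q b d))"
    by simp
  also have "\<dots> = un B (\<lambda>a. q a y)"
    using bH by simp
  finally show ?thesis using e by simp
qed

lemmas swHB = cm_cm_swap[of "comult B" _ "comult H"]

definition "TT = tensV (comult B) (tensV (comult H) (comult H))"
definition "eT = (\<lambda>(x, y). counit B x * (case y of (y1,y2) \<Rightarrow> counit H y1 * counit H y2))"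

lemma coalgT: "coalg TT eT"
  unfolding TT_def eT_def by (intro coalg_tens coalg_bialg bB bH)

lemma Q3: "mu H y y' (\<lambda>c. q x c) = cm B x (\<lambda>a b. q a y * q b y')"
proof -
  interpret T: coalg TT eT by (rule coalgT)
  define F where "F = (\<lambda>(x,(y,y')). mu H y y' (\<lambda>c. p x c))"
  define G1 where "G1 = (\<lambda>(x,(y,y')). mu H y y' (\<lambda>c. q x c))"
  define G2 where "G2 = (\<lambda>(x,(y,y')). cm B x (\<lambda>a b. q a y * q b y'))"
  have FG1: "convf TT F G1 z = eT z" for z
  proof -
    obtain x y y' where z: "z = (x,(y,y'))" by (cases z) auto
    have "convf TT F G1 z = cm B x (\<lambda>a b. cm H y (\<lambda>c d. cm H y' (\<lambda>c' d'. mu H c c' (p a) * mu H d d' (q b))))"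
      by (simp add: z convf_def TT_def F_def G1_def)
    also have "\<dots> = cm B x (\<lambda>a b. mu H y y' (\<lambda>e. cm H e (\<lambda>c d. p a c * q b d)))"
      using bH by (simp add: comult_mult)
    also have "\<dots> = mu H y y' (\<lambda>e. cm B x (\<lambda>a b. cm H e (\<lambda>c d. p a c * q b d)))"
      by (simp only: cm_mu_swap)
    also have "\<dots> = eT z"
      using bH by (simp add: CI1 z eT_def)
    finally show ?thesis .
  qed
  have G2F: "convf TT G2 F z = eT z" for z
  proof -
    obtain x y y' where z: "z = (x,(y,y'))" by (cases z) auto
    have "convf TT G2 F z = cm B x (\<lambda>a b. cm H y (\<lambda>c d. cm H y' (\<lambda>c' d'. cm B a (\<lambda>a1 a2. q a1 c * q a2 c') * mu H d d' (p b))))"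
      by (simp add: z convf_def TT_def F_def G2_def)
    also have "\<dots> = cm B x (\<lambda>a b. cm H y (\<lambda>c d. cm H y' (\<lambda>c' d'. cm B a (\<lambda>a1 a2. q a1 c * q a2 c') * cm B b (\<lambda>b1 b2. p b2 d * p b1 d'))))"
      by (simp only: SP2)
    also have "\<dots> = cm B x (\<lambda>a b. cm B a (\<lambda>a1 a2. cm B b (\<lambda>b1 b2. cm H y (\<lambda>c d. cm H y' (\<lambda>c' d'. q a1 c * (q a2 c' * (p b2 d * p b1 d')))))))"
      by ((simp only: cm_inR swHB)?, (simp only: cm_inL swHB mult.assoc mult.commute mult.left_commute)?)
    also have "\<dots> = cm B x (\<lambda>a1 r. cm B r (\<lambda>m b2. cm B m (\<lambda>a2 b1. cm H y (\<lambda>c d. cm H y' (\<lambda>c' d'. q a1 c * (q a2 c' * (p b2 d * p b1 d')))))))"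
      by (rule coalg.A4[OF coalg_bialg[OF bB]])
    also have "\<dots> = cm B x (\<lambda>a1 r. cm B r (\<lambda>m b2. cm H y (\<lambda>c d. q a1 c * p b2 d * cm B m (\<lambda>a2 b1. cm H y' (\<lambda>c' d'. q a2 c' * p b1 d')))))"
      by ((simp only: cm_inR swHB)?, (simp only: cm_inL swHB mult.assoc mult.commute mult.left_commute)?)
    also have "\<dots> = cm B x (\<lambda>a1 r. cm B r (\<lambda>m b2. counit B m * (counit H y' * cm H y (\<lambda>c d. p b2 d * q a1 c))))"
      by (simp only: CI2) (simp add: ac_simps)
    also have "\<dots> = counit H y' * cm B x (\<lambda>a1 r. cm H y (\<lambda>c d. p r d * q a1 c))"
      using bB by simp
    also have "\<dots> = eT z"
      using bB bH by (simp add: CI2' z eT_def)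
    finally show ?thesis .
  qed
  have "G2 (x,(y,y')) = G1 (x,(y,y'))"
    by (rule T.inv_unique[OF FG1 G2F])
  then show ?thesis by (simp add: G1_def G2_def)
qed

lemma CI1s: "cm H y (\<lambda>c d. cm B x (\<lambda>a b. p a c * q b d)) = counit B x * counit H y"
  using CI1[of x y] by (simp only: swHB)
lemma CI2s: "cm H y (\<lambda>c d. cm B x (\<lambda>a b. q a c * p b d)) = counit B x * counit H y"
  using CI2[of x y] by (simp only: swHB)

definition "TT' = tensV (comult H) (tensV (comult B) (comult B))"
definition "eT' = (\<lambda>(y, x). counit H y * (case x of (x1,x2) \<Rightarrow> counit B x1 * counit B x2))"

lemma coalgT': "coalg TT' eT'"
  unfolding TT'_def eT'_def by (intro coalg_tens coalg_bialg bB bH)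

lemma Q4: "mu B x x' (\<lambda>a. q a y) = cm H y (\<lambda>c d. q x d * q x' c)"
proof -
  interpret T: coalg TT' eT' by (rule coalgT')
  define F where "F = (\<lambda>(y,(x,x')). mu B x x' (\<lambda>a. p a y))"
  define G1 where "G1 = (\<lambda>(y,(x,x')). mu B x x' (\<lambda>a. q a y))"
  define G2 where "G2 = (\<lambda>(y,(x,x')). cm H y (\<lambda>c d. q x d * q x' c))"
  have FG1: "convf TT' F G1 z = eT' z" for z
  proof -
    obtain x y x' where z: "z = (y,(x,x'))" by (cases z) auto
    have "convf TT' F G1 z = cm H y (\<lambda>c d. cm B x (\<lambda>a b. cm B x' (\<lambda>a' b'. mu B a a' (\<lambda>e. p e c) * mu B b b' (\<lambda>e. q e d))))"
      by (simp add: z convf_def TT'_def F_def G1_def)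
    also have "\<dots> = cm H y (\<lambda>c d. mu B x x' (\<lambda>e. cm B e (\<lambda>a b. p a c * q b d)))"
      using bB by (simp add: comult_mult)
    also have "\<dots> = mu B x x' (\<lambda>e. cm H y (\<lambda>c d. cm B e (\<lambda>a b. p a c * q b d)))"
      by (simp only: cm_mu_swap)
    also have "\<dots> = eT' z"
      using bB by (simp add: CI1s z eT'_def ac_simps)
    finally show ?thesis .
  qed
  have G2F: "convf TT' G2 F z = eT' z" for z
  proof -
    obtain x y x' where z: "z = (y,(x,x'))" by (cases z) auto
    have "convf TT' G2 F z = cm H y (\<lambda>y1 y2. cm B x (\<lambda>x1 x2. cm B x' (\<lambda>x1' x2'. cm H y1 (\<lambda>c d. q x1 d * q x1' c) * mu B x2 x2' (\<lambda>e. p e y2))))"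
      by (simp add: z convf_def TT'_def F_def G2_def)
    also have "\<dots> = cm H y (\<lambda>y1 y2. cm B x (\<lambda>x1 x2. cm B x' (\<lambda>x1' x2'. cm H y1 (\<lambda>c d. q x1 d * q x1' c) * cm H y2 (\<lambda>c d. p x2 c * p x2' d))))"
      by (simp only: SP1)
    also have "\<dots> = cm H y (\<lambda>y1 y2. cm H y1 (\<lambda>c1 d1. cm H y2 (\<lambda>c2 d2. cm B x (\<lambda>x1 x2. cm B x' (\<lambda>x1' x2'. q x1 d1 * (q x1' c1 * (p x2 c2 * p x2' d2)))))))"
      by ((simp only: cm_inR swHB)?, (simp only: cm_inL swHB mult.assoc)?)
    also have "\<dots> = cm H y (\<lambda>c1 r. cm H r (\<lambda>m d2. cm H m (\<lambda>d1 c2. cm B x (\<lambda>x1 x2. cm B x' (\<lambda>x1' x2'. q x1 d1 * (q x1' c1 * (p x2 c2 * p x2' d2)))))))"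
      by (rule coalg.A4[OF coalg_bialg[OF bH]])
    also have "\<dots> = cm H y (\<lambda>c1 r. cm H r (\<lambda>m d2. cm B x' (\<lambda>x1' x2'. q x1' c1 * p x2' d2 * cm H m (\<lambda>d1 c2. cm B x (\<lambda>x1 x2. q x1 d1 * p x2 c2)))))"
      by ((simp only: cm_inR swHB cm_cm_swap[of "comult B" x' "comult B" x])?, (simp only: cm_inL swHB cm_cm_swap[of "comult B" x' "comult B" x] mult.assoc mult.commute mult.left_commute)?)
    also have "\<dots> = cm H y (\<lambda>c1 r. cm H r (\<lambda>m d2. cm B x' (\<lambda>x1' x2'. q x1' c1 * p x2' d2 * (counit B x * counit H m))))"
      by (simp only: CI2s)
    also have "\<dots> = cm H y (\<lambda>c1 r. cm H r (\<lambda>m d2. counit H m * cm B x' (\<lambda>x1' x2'. q x1' c1 * p x2' d2))) * counit B x"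
      by (simp add: ac_simps)
    also have "\<dots> = cm H y (\<lambda>c1 r. cm B x' (\<lambda>x1' x2'. q x1' c1 * p x2' r)) * counit B x"
      using bH by simp
    also have "\<dots> = eT' z"
      by (simp only: CI2s) (simp add: z eT'_def ac_simps)
    finally show ?thesis .
  qed
  have "G2 (y,(x,x')) = G1 (y,(x,x'))"
    by (rule T.inv_unique[OF FG1 G2F])
  then show ?thesis by (simp add: G1_def G2_def)
qed

end

locale cqt =
  fixes A :: "('b,'k::field) bialg" and s :: "'b \<Rightarrow> 'b \<Rightarrow> 'k"
  assumes cq: "cqt_form A s"
begin

lemma C1: "mu A h h' (\<lambda>a. s a g) = cm A g (\<lambda>c d. s h c * s h' d)"
  using cq by (simp add: cqt_form_def mu_def cm_def case_prod_unfold)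
lemma C2: "mu A h h' (\<lambda>c. s g c) = cm A g (\<lambda>a b. s b h * s a h')"
  using cq by (simp add: cqt_form_def mu_def cm_def case_prod_unfold)
lemma C3a [simp]: "un A (\<lambda>a. s a h) = counit A h"
  using cq by (simp add: cqt_form_def un_def)
lemma C3b [simp]: "un A (\<lambda>c. s h c) = counit A h"
  using cq by (simp add: cqt_form_def un_def)
lemma C4: "cm A h (\<lambda>a b. cm A h' (\<lambda>c d. s a c * mu A b d f)) = cm A h (\<lambda>a b. cm A h' (\<lambda>c d. s b d * mu A c a f))"
proof -
  have "lext (\<lambda>((a,b),(c,d)). smult (s a c) (mult A b d)) (tens (comult A h) (comult A h'))
           = lext (\<lambda>((a,b),(c,d)). smult (s b d) (mult A c a)) (tens (comult A h) (comult A h'))"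
    using cq by (simp add: cqt_form_def)
  then have "lfun f (lext (\<lambda>((a,b),(c,d)). smult (s a c) (mult A b d)) (tens (comult A h) (comult A h')))
           = lfun f (lext (\<lambda>((a,b),(c,d)). smult (s b d) (mult A c a)) (tens (comult A h) (comult A h')))"
    by simp
  then show ?thesis by (simp add: cm_def mu_def case_prod_unfold)
qed

end

lemma convinv1: "conv_inverse A C s t \<Longrightarrow> cm A x (\<lambda>a b. cm C y (\<lambda>c d. s a c * t b d)) = counit A x * counit C y"
  by (simp add: conv_inverse_def conv_def cm_def case_prod_unfold)
lemma convinv2: "conv_inverse A C s t \<Longrightarrow> cm A x (\<lambda>a b. cm C y (\<lambda>c d. t a c * s b d)) = counit A x * counit C y"
  by (simp add: conv_inverse_def conv_def cm_def case_prod_unfold)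


context
  fixes B :: "('b,'k::field) bialg" and H :: "('c,'k) bialg"
    and p q :: "'b \<Rightarrow> 'c \<Rightarrow> 'k"
begin

lemma D_comult: "comult (gen_double B H p q) = tensV (comult B) (comult H)"
  by (simp add: gen_double_def tensV_def)

lemma D_counit: "counit (gen_double B H p q) (x,y) = counit B x * counit H y"
  by (simp add: gen_double_def)

lemma D_one: "un (gen_double B H p q) f = un B (\<lambda>a. un H (\<lambda>b. f (a,b)))"
  by (simp add: gen_double_def un_def)

lemma D_mult: "mu (gen_double B H p q) (x,y) (x',y') f =
   cm B x' (\<lambda>a a3. cm B a (\<lambda>a1 a2. cm H y (\<lambda>c c3. cm H c (\<lambda>c1 c2. p a1 c1 * q a3 c3 * mu B x a2 (\<lambda>e. mu H c2 y' (\<lambda>g. f (e,g)))))))"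
  apply (simp add: gen_double_def mu_def cm_def case_prod_unfold)
  done
end

locale dd = pq B H p q + SB: cqt B sB + SH: cqt H sH
  for B :: "('b,'k::field) bialg" and H :: "('c,'k) bialg" and p q and sB sH +
  fixes tB tH
  assumes ciB: "conv_inverse B B sB tB" and ciH: "conv_inverse H H sH tH"
begin

definition LB where "LB u v x = cm B x (\<lambda>x1 x2. sB x2 u * p x1 v)"
definition LH where "LH u v y = cm H y (\<lambda>y1 y2. q u y2 * sH y1 v)"

lemma LB_fun: "LB u v = (\<lambda>x. cm B x (\<lambda>x1 x2. sB x2 u * p x1 v))"
  by (rule ext) (simp add: LB_def)
lemma LH_fun: "LH u v = (\<lambda>y. cm H y (\<lambda>y1 y2. q u y2 * sH y1 v))"
  by (rule ext) (simp add: LH_def)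

lemma LB_mult: "mu B x x' (LB u v) = cm B u (\<lambda>u1 u2. cm H v (\<lambda>v1 v2. LB u1 v1 x * LB u2 v2 x'))"
proof -
  note sw = swHB cm_cm_swap[of "comult B" x "comult B" u] cm_cm_swap[of "comult B" x' "comult B" u]
     cm_cm_swap[of "comult B" x' "comult B" x]
  have "mu B x x' (LB u v) = cm B x (\<lambda>x1 x2. cm B x' (\<lambda>x1' x2'. cm B u (\<lambda>c d. sB x2 c * sB x2' d) * cm H v (\<lambda>c d. p x1 c * p x1' d)))"
    using bB by (simp add: LB_fun comult_mult SB.C1 SP1)
  also have "\<dots> = cm B u (\<lambda>u1 u2. cm H v (\<lambda>v1 v2. LB u1 v1 x * LB u2 v2 x'))"
    unfolding LB_def
    by ((simp only: cm_inR sw)?, (simp only: cm_inL sw mult.assoc mult.commute mult.left_commute)?)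
  finally show ?thesis .
qed

lemma LH_mult: "mu H y y' (LH u v) = cm B u (\<lambda>u1 u2. cm H v (\<lambda>v1 v2. LH u1 v1 y * LH u2 v2 y'))"
proof -
  note sw = swHB cm_cm_swap[of "comult H" y "comult H" v] cm_cm_swap[of "comult H" y' "comult H" v]
     cm_cm_swap[of "comult H" y' "comult H" y]
  show ?thesis
    unfolding LH_fun using bH
    by (simp add: comult_mult Q3 SH.C1,
        (simp only: cm_inR sw)?, (simp only: cm_inL sw mult.assoc mult.commute mult.left_commute)?)
qed

lemma K1: "cm B X (\<lambda>X1 X2. cm H Y (\<lambda>Y1 Y2. cm H v (\<lambda>v1 v2. p X1 Y1 * p X2 v1 * sH Y2 v2))) =
           cm B X (\<lambda>X1 X2. cm H Y (\<lambda>Y1 Y2. cm H v (\<lambda>v1 v2. sH Y1 v1 * p X1 v2 * p X2 Y2)))"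
proof -
  note sw = swHB cm_cm_swap[of "comult H" Y "comult H" v]
  have "cm B X (\<lambda>X1 X2. cm H Y (\<lambda>Y1 Y2. cm H v (\<lambda>v1 v2. p X1 Y1 * p X2 v1 * sH Y2 v2))) =
        cm H Y (\<lambda>Y1 Y2. cm H v (\<lambda>v1 v2. sH Y2 v2 * mu H v1 Y1 (p X)))"
    by (simp only: SP2, (simp only: cm_inR sw)?, (simp only: cm_inL sw mult.assoc mult.commute mult.left_commute)?)
  also have "\<dots> = cm H Y (\<lambda>Y1 Y2. cm H v (\<lambda>v1 v2. sH Y1 v1 * mu H Y2 v2 (p X)))"
    by (rule SH.C4[symmetric])
  also have "\<dots> = cm B X (\<lambda>X1 X2. cm H Y (\<lambda>Y1 Y2. cm H v (\<lambda>v1 v2. sH Y1 v1 * p X1 v2 * p X2 Y2)))"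
    by (simp only: SP2, (simp only: cm_inR sw)?, (simp only: cm_inL sw mult.assoc mult.commute mult.left_commute)?)
  finally show ?thesis .
qed

lemma K2: "cm B X (\<lambda>X1 X2. cm H Y (\<lambda>Y1 Y2. cm B u (\<lambda>u1 u2. sB X1 u1 * q u2 Y1 * q X2 Y2))) =
           cm B X (\<lambda>X1 X2. cm H Y (\<lambda>Y1 Y2. cm B u (\<lambda>u1 u2. q X1 Y1 * q u1 Y2 * sB X2 u2)))"
proof -
  note sw = swHB cm_cm_swap[of "comult B" X "comult B" u]
  have "cm B X (\<lambda>X1 X2. cm H Y (\<lambda>Y1 Y2. cm B u (\<lambda>u1 u2. sB X1 u1 * q u2 Y1 * q X2 Y2))) =
        cm B X (\<lambda>X1 X2. cm B u (\<lambda>u1 u2. sB X1 u1 * mu B X2 u2 (\<lambda>a. q a Y)))"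
    by (simp only: Q4, (simp only: cm_inR sw)?, (simp only: cm_inL sw mult.assoc mult.commute mult.left_commute)?)
  also have "\<dots> = cm B X (\<lambda>X1 X2. cm B u (\<lambda>u1 u2. sB X2 u2 * mu B u1 X1 (\<lambda>a. q a Y)))"
    by (rule SB.C4)
  also have "\<dots> = cm B X (\<lambda>X1 X2. cm H Y (\<lambda>Y1 Y2. cm B u (\<lambda>u1 u2. q X1 Y1 * q u1 Y2 * sB X2 u2)))"
    by (simp only: Q4, (simp only: cm_inR sw)?, (simp only: cm_inL sw mult.assoc mult.commute mult.left_commute)?)
  finally show ?thesis .
qed

lemma cross: "cm B x' (\<lambda>a a3. cm B a (\<lambda>a1 a2. cm H y (\<lambda>c c3. cm H c (\<lambda>c1 c2.
      p a1 c1 * q a3 c3 * cm B u (\<lambda>u1 u2. cm H v (\<lambda>v1 v2. LB u1 v1 a2 * LH u2 v2 c2))))))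
   = cm B u (\<lambda>u1 u2. cm H v (\<lambda>v1 v2. LH u1 v1 y * LB u2 v2 x'))"
proof -
  note sw = swHB cm_cm_swap[of "comult H" _ "comult H" v] cm_cm_swap[of "comult B" _ "comult B" u]
  note g1 = coalg.G1[OF coalg_bialg[OF bB]] coalg.G1[OF coalg_bialg[OF bH]]
  note a4 = coalg.A4[OF coalg_bialg[OF bB]] coalg.A4[OF coalg_bialg[OF bH]]
  have "cm B x' (\<lambda>a a3. cm B a (\<lambda>a1 a2. cm H y (\<lambda>c c3. cm H c (\<lambda>c1 c2.
      p a1 c1 * q a3 c3 * cm B u (\<lambda>u1 u2. cm H v (\<lambda>v1 v2. LB u1 v1 a2 * LH u2 v2 c2))))))
    = cm B x' (\<lambda>X X'. cm H y (\<lambda>Y Y'. 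
        cm B X (\<lambda>X1 X2. cm H Y (\<lambda>Y1 Y2. cm H v (\<lambda>v1 v2. p X1 Y1 * p X2 v1 * sH Y2 v2))) *
        cm B X' (\<lambda>X1 X2. cm H Y' (\<lambda>Y1 Y2. cm B u (\<lambda>u1 u2. sB X1 u1 * q u2 Y1 * q X2 Y2)))))"
    unfolding LB_def LH_def
    by ((simp only: cm_inR sw)?, (simp only: cm_inL sw g1 mult.assoc mult.commute mult.left_commute)?)
  also have "\<dots> = cm B x' (\<lambda>X X'. cm H y (\<lambda>Y Y'. 
        cm B X (\<lambda>X1 X2. cm H Y (\<lambda>Y1 Y2. cm H v (\<lambda>v1 v2. sH Y1 v1 * p X1 v2 * p X2 Y2))) *
        cm B X' (\<lambda>X1 X2. cm H Y' (\<lambda>Y1 Y2. cm B u (\<lambda>u1 u2. q X1 Y1 * q u1 Y2 * sB X2 u2)))))"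
    by (simp only: K1 K2)
  also have "\<dots> = cm B x' (\<lambda>X1 RB. cm B RB (\<lambda>MB X'2. cm H y (\<lambda>Y1 RH. cm H RH (\<lambda>MH Y'2.
        cm B u (\<lambda>u1 u2. cm H v (\<lambda>v1 v2. sH Y1 v1 * p X1 v2 * q u1 Y'2 * sB X'2 u2 *
          cm B MB (\<lambda>X2 X'1. cm H MH (\<lambda>Y2 Y'1. p X2 Y2 * q X'1 Y'1))))))))"
    by ((simp only: cm_inR sw)?, (simp only: cm_inL sw a4 mult.assoc mult.commute mult.left_commute)?)
  also have "\<dots> = cm B x' (\<lambda>X1 RB. cm B RB (\<lambda>MB X'2. cm H y (\<lambda>Y1 RH. cm H RH (\<lambda>MH Y'2.
        cm B u (\<lambda>u1 u2. cm H v (\<lambda>v1 v2. sH Y1 v1 * p X1 v2 * q u1 Y'2 * sB X'2 u2 *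
          (counit B MB * counit H MH)))))))"
    by (simp only: CI1)
  also have "\<dots> = cm B x' (\<lambda>X1 RB. cm B RB (\<lambda>MB X'2. counit B MB * cm H y (\<lambda>Y1 RH. cm H RH (\<lambda>MH Y'2. counit H MH *
        cm B u (\<lambda>u1 u2. cm H v (\<lambda>v1 v2. sH Y1 v1 * p X1 v2 * q u1 Y'2 * sB X'2 u2))))))"
    by ((simp only: cm_inR sw)?, (simp only: cm_inL sw mult.assoc mult.commute mult.left_commute)?)
  also have "\<dots> = cm B x' (\<lambda>X1 X'2. cm H y (\<lambda>Y1 Y'2. 
        cm B u (\<lambda>u1 u2. cm H v (\<lambda>v1 v2. sH Y1 v1 * p X1 v2 * q u1 Y'2 * sB X'2 u2))))"
    using bB bH by (simp only: counitL)
  also have "\<dots> = cm B u (\<lambda>u1 u2. cm H v (\<lambda>v1 v2. LH u1 v1 y * LB u2 v2 x'))"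
    unfolding LB_def LH_def
    by ((simp only: cm_inR sw)?, (simp only: cm_inL sw mult.assoc mult.commute mult.left_commute)?)
  finally show ?thesis .
qed

abbreviation "CD \<equiv> tensV (comult B) (comult H)"

definition LBz where "LBz Z x = LB (fst Z) (snd Z) x"
definition LHz where "LHz Z y = LH (fst Z) (snd Z) y"
definition sD where "sD X Z = cmv CD Z (\<lambda>Z1 Z2. LBz Z1 (fst X) * LHz Z2 (snd X))"

lemma LBz_fun: "LBz Z = LB (fst Z) (snd Z)" by (rule ext) (simp add: LBz_def)
lemma LHz_fun: "LHz Z = LH (fst Z) (snd Z)" by (rule ext) (simp add: LHz_def)

lemma LBz_mult: "mu B x x' (LBz Z) = cmv CD Z (\<lambda>Z1 Z2. LBz Z1 x * LBz Z2 x')"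
  by (cases Z) (simp add: LBz_fun LB_mult LBz_def)
lemma LHz_mult: "mu H y y' (LHz Z) = cmv CD Z (\<lambda>Z1 Z2. LHz Z1 y * LHz Z2 y')"
  by (cases Z) (simp add: LHz_fun LH_mult LHz_def)

lemma cross_z: "cm B x' (\<lambda>a a3. cm B a (\<lambda>a1 a2. cm H y (\<lambda>c c3. cm H c (\<lambda>c1 c2.
      p a1 c1 * q a3 c3 * cmv CD M (\<lambda>Z1 Z2. LBz Z1 a2 * LHz Z2 c2)))))
   = cmv CD M (\<lambda>Z1 Z2. LHz Z1 y * LBz Z2 x')"
  by (cases M) (simp add: LBz_def LHz_def cross)

lemma sD_mult1: "mu (gen_double B H p q) X Y (\<lambda>W. sD W Z) = cmv CD Z (\<lambda>Z1 Z2. sD X Z1 * sD Y Z2)"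
proof -
  obtain x y where X: "X = (x,y)" by (cases X)
  obtain x' y' where Y: "Y = (x',y')" by (cases Y)
  note sw = cm_cm_swap[of "comult B" _ CD] cm_cm_swap[of "comult H" _ CD] swHB
  note a4 = coalg.A4[OF coalg_tens[OF coalg_bialg[OF bB] coalg_bialg[OF bH]]]
  note mus = cm_mu_swap[symmetric]
  have "mu (gen_double B H p q) X Y (\<lambda>W. sD W Z) = cmv CD Z (\<lambda>Za R. cmv CD R (\<lambda>M Zd. LBz Za x * LHz Zd y' *
      cm B x' (\<lambda>a a3. cm B a (\<lambda>a1 a2. cm H y (\<lambda>c c3. cm H c (\<lambda>c1 c2.
      p a1 c1 * q a3 c3 * cmv CD M (\<lambda>Z1 Z2. LBz Z1 a2 * LHz Z2 c2)))))))"
    by (simp add: X Y D_mult sD_def mus LBz_mult LHz_mult,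
       (simp only: cm_inR sw)?, (simp only: cm_inL sw a4 mult.assoc mult.commute mult.left_commute)?)
  also have "\<dots> = cmv CD Z (\<lambda>Za R. cmv CD R (\<lambda>M Zd. LBz Za x * LHz Zd y' *
      cmv CD M (\<lambda>Z1 Z2. LHz Z1 y * LBz Z2 x')))"
    by (simp only: cross_z)
  also have "\<dots> = cmv CD Z (\<lambda>Z1 Z2. sD X Z1 * sD Y Z2)"
    unfolding sD_def X Y fst_conv snd_conv
    by ((simp only: cm_inR sw)?, (simp only: cm_inL sw a4 mult.assoc mult.commute mult.left_commute)?)
  finally show ?thesis .
qed

definition RB where "RB u v x = cm B x (\<lambda>x1 x2. sB u x1 * q x2 v)"
definition RH where "RH u v y = cm H y (\<lambda>y1 y2. p u y1 * sH v y2)"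
definition RBz where "RBz Z x = RB (fst Z) (snd Z) x"
definition RHz where "RHz Z y = RH (fst Z) (snd Z) y"

lemma RB_fun: "RB u v = (\<lambda>x. cm B x (\<lambda>x1 x2. sB u x1 * q x2 v))"
  by (rule ext) (simp add: RB_def)
lemma RH_fun: "RH u v = (\<lambda>y. cm H y (\<lambda>y1 y2. p u y1 * sH v y2))"
  by (rule ext) (simp add: RH_def)
lemma RBz_fun: "RBz Z = RB (fst Z) (snd Z)" by (rule ext) (simp add: RBz_def)
lemma RHz_fun: "RHz Z = RH (fst Z) (snd Z)" by (rule ext) (simp add: RHz_def)

lemma sD_R: "sD Z (x,y) = cmv CD Z (\<lambda>Z1 Z2. RBz Z2 x * RHz Z1 y)"
proof -
  obtain u v where Z: "Z = (u,v)" by (cases Z)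
  note sw = swHB cm_cm_swap[of "comult H" _ "comult H" v] cm_cm_swap[of "comult B" _ "comult B" u]
  show ?thesis
    unfolding Z sD_def LBz_def LHz_def RBz_def RHz_def LB_def LH_def RB_def RH_def
    by (simp only: cmv_tensV fst_conv snd_conv, (simp only: cm_inR sw)?, (simp only: cm_inL sw mult.assoc mult.commute mult.left_commute)?)
qed

lemma RB_mult: "mu B x x' (RB u v) = cm B u (\<lambda>u1 u2. cm H v (\<lambda>v1 v2. RB u2 v2 x * RB u1 v1 x'))"
proof -
  note sw = swHB cm_cm_swap[of "comult B" x "comult B" u] cm_cm_swap[of "comult B" x' "comult B" u]
     cm_cm_swap[of "comult B" x' "comult B" x]
  show ?thesis
    unfolding RB_fun using bB
    by (simp add: comult_mult Q4 SB.C2,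
        (simp only: cm_inR sw)?, (simp only: cm_inL sw mult.assoc mult.commute mult.left_commute)?)
qed

lemma RH_mult: "mu H y y' (RH u v) = cm B u (\<lambda>u1 u2. cm H v (\<lambda>v1 v2. RH u2 v2 y * RH u1 v1 y'))"
proof -
  note sw = swHB cm_cm_swap[of "comult H" y "comult H" v] cm_cm_swap[of "comult H" y' "comult H" v]
     cm_cm_swap[of "comult H" y' "comult H" y]
  show ?thesis
    unfolding RH_fun using bH
    by (simp add: comult_mult SP2 SH.C2,
        (simp only: cm_inR sw)?, (simp only: cm_inL sw mult.assoc mult.commute mult.left_commute)?)
qed

lemma K1': "cm B X (\<lambda>X1 X2. cm H Y (\<lambda>Y1 Y2. cm B u (\<lambda>u1 u2. p X1 Y1 * sB u2 X2 * p u1 Y2))) =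
            cm B X (\<lambda>X1 X2. cm H Y (\<lambda>Y1 Y2. cm B u (\<lambda>u1 u2. sB u1 X1 * p u2 Y1 * p X2 Y2)))"
proof -
  note sw = swHB cm_cm_swap[of "comult B" X "comult B" u]
  have "cm B X (\<lambda>X1 X2. cm H Y (\<lambda>Y1 Y2. cm B u (\<lambda>u1 u2. p X1 Y1 * sB u2 X2 * p u1 Y2))) =
        cm B u (\<lambda>u1 u2. cm B X (\<lambda>X1 X2. sB u2 X2 * mu B X1 u1 (\<lambda>a. p a Y)))"
    by (simp only: SP1, (simp only: cm_inR sw)?, (simp only: cm_inL sw mult.assoc mult.commute mult.left_commute)?)
  also have "\<dots> = cm B u (\<lambda>u1 u2. cm B X (\<lambda>X1 X2. sB u1 X1 * mu B u2 X2 (\<lambda>a. p a Y)))"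
    by (rule SB.C4[symmetric])
  also have "\<dots> = cm B X (\<lambda>X1 X2. cm H Y (\<lambda>Y1 Y2. cm B u (\<lambda>u1 u2. sB u1 X1 * p u2 Y1 * p X2 Y2)))"
    by (simp only: SP1, (simp only: cm_inR sw)?, (simp only: cm_inL sw mult.assoc mult.commute mult.left_commute)?)
  finally show ?thesis .
qed

lemma K2': "cm B X (\<lambda>X1 X2. cm H Y (\<lambda>Y1 Y2. cm H v (\<lambda>v1 v2. q X1 v2 * sH v1 Y1 * q X2 Y2))) =
            cm B X (\<lambda>X1 X2. cm H Y (\<lambda>Y1 Y2. cm H v (\<lambda>v1 v2. q X1 Y1 * q X2 v1 * sH v2 Y2)))"
proof -
  note sw = swHB cm_cm_swap[of "comult H" Y "comult H" v]
  have "cm B X (\<lambda>X1 X2. cm H Y (\<lambda>Y1 Y2. cm H v (\<lambda>v1 v2. q X1 v2 * sH v1 Y1 * q X2 Y2))) =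
        cm H v (\<lambda>v1 v2. cm H Y (\<lambda>Y1 Y2. sH v1 Y1 * mu H v2 Y2 (q X)))"
    by (simp only: Q3, (simp only: cm_inR sw)?, (simp only: cm_inL sw mult.assoc mult.commute mult.left_commute)?)
  also have "\<dots> = cm H v (\<lambda>v1 v2. cm H Y (\<lambda>Y1 Y2. sH v2 Y2 * mu H Y1 v1 (q X)))"
    by (rule SH.C4)
  also have "\<dots> = cm B X (\<lambda>X1 X2. cm H Y (\<lambda>Y1 Y2. cm H v (\<lambda>v1 v2. q X1 Y1 * q X2 v1 * sH v2 Y2)))"
    by (simp only: Q3, (simp only: cm_inR sw)?, (simp only: cm_inL sw mult.assoc mult.commute mult.left_commute)?)
  finally show ?thesis .
qed

lemma crossR: "cm B x' (\<lambda>a a3. cm B a (\<lambda>a1 a2. cm H y (\<lambda>c c3. cm H c (\<lambda>c1 c2.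
      p a1 c1 * q a3 c3 * cm B u (\<lambda>u1 u2. cm H v (\<lambda>v1 v2. RB u2 v2 a2 * RH u1 v1 c2))))))
   = cm B u (\<lambda>u1 u2. cm H v (\<lambda>v1 v2. RH u2 v2 y * RB u1 v1 x'))"
proof -
  note sw = swHB cm_cm_swap[of "comult H" _ "comult H" v] cm_cm_swap[of "comult B" _ "comult B" u]
  note g1 = coalg.G1[OF coalg_bialg[OF bB]] coalg.G1[OF coalg_bialg[OF bH]]
  note a4 = coalg.A4[OF coalg_bialg[OF bB]] coalg.A4[OF coalg_bialg[OF bH]]
  have "cm B x' (\<lambda>a a3. cm B a (\<lambda>a1 a2. cm H y (\<lambda>c c3. cm H c (\<lambda>c1 c2.
      p a1 c1 * q a3 c3 * cm B u (\<lambda>u1 u2. cm H v (\<lambda>v1 v2. RB u2 v2 a2 * RH u1 v1 c2))))))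
    = cm B x' (\<lambda>X X'. cm H y (\<lambda>Y Y'. 
        cm B X (\<lambda>X1 X2. cm H Y (\<lambda>Y1 Y2. cm B u (\<lambda>u1 u2. p X1 Y1 * sB u2 X2 * p u1 Y2))) *
        cm B X' (\<lambda>X1 X2. cm H Y' (\<lambda>Y1 Y2. cm H v (\<lambda>v1 v2. q X1 v2 * sH v1 Y1 * q X2 Y2)))))"
    unfolding RB_def RH_def
    by ((simp only: cm_inR sw)?, (simp only: cm_inL sw g1 mult.assoc mult.commute mult.left_commute)?)
  also have "\<dots> = cm B x' (\<lambda>X X'. cm H y (\<lambda>Y Y'. 
        cm B X (\<lambda>X1 X2. cm H Y (\<lambda>Y1 Y2. cm B u (\<lambda>u1 u2. sB u1 X1 * p u2 Y1 * p X2 Y2))) *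
        cm B X' (\<lambda>X1 X2. cm H Y' (\<lambda>Y1 Y2. cm H v (\<lambda>v1 v2. q X1 Y1 * q X2 v1 * sH v2 Y2)))))"
    by (simp only: K1' K2')
  also have "\<dots> = cm B x' (\<lambda>X1 RB. cm B RB (\<lambda>MB X'2. cm H y (\<lambda>Y1 RH. cm H RH (\<lambda>MH Y'2.
        cm B u (\<lambda>u1 u2. cm H v (\<lambda>v1 v2. sB u1 X1 * p u2 Y1 * q X'2 v1 * sH v2 Y'2 *
          cm B MB (\<lambda>X2 X'1. cm H MH (\<lambda>Y2 Y'1. p X2 Y2 * q X'1 Y'1))))))))"
    by ((simp only: cm_inR sw)?, (simp only: cm_inL sw a4 mult.assoc mult.commute mult.left_commute)?)
  also have "\<dots> = cm B x' (\<lambda>X1 RB. cm B RB (\<lambda>MB X'2. cm H y (\<lambda>Y1 RH. cm H RH (\<lambda>MH Y'2.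
        cm B u (\<lambda>u1 u2. cm H v (\<lambda>v1 v2. sB u1 X1 * p u2 Y1 * q X'2 v1 * sH v2 Y'2 *
          (counit B MB * counit H MH)))))))"
    by (simp only: CI1)
  also have "\<dots> = cm B x' (\<lambda>X1 RB. cm B RB (\<lambda>MB X'2. counit B MB * cm H y (\<lambda>Y1 RH. cm H RH (\<lambda>MH Y'2. counit H MH *
        cm B u (\<lambda>u1 u2. cm H v (\<lambda>v1 v2. sB u1 X1 * p u2 Y1 * q X'2 v1 * sH v2 Y'2))))))"
    by ((simp only: cm_inR sw)?, (simp only: cm_inL sw mult.assoc mult.commute mult.left_commute)?)
  also have "\<dots> = cm B x' (\<lambda>X1 X'2. cm H y (\<lambda>Y1 Y'2. 
        cm B u (\<lambda>u1 u2. cm H v (\<lambda>v1 v2. sB u1 X1 * p u2 Y1 * q X'2 v1 * sH v2 Y'2))))"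
    using bB bH by (simp only: counitL)
  also have "\<dots> = cm B u (\<lambda>u1 u2. cm H v (\<lambda>v1 v2. RH u2 v2 y * RB u1 v1 x'))"
    unfolding RB_def RH_def
    by ((simp only: cm_inR sw)?, (simp only: cm_inL sw mult.assoc mult.commute mult.left_commute)?)
  finally show ?thesis .
qed

lemma RBz_mult: "mu B x x' (RBz Z) = cmv CD Z (\<lambda>Z1 Z2. RBz Z2 x * RBz Z1 x')"
  by (cases Z) (simp add: RBz_fun RB_mult RBz_def)
lemma RHz_mult: "mu H y y' (RHz Z) = cmv CD Z (\<lambda>Z1 Z2. RHz Z2 y * RHz Z1 y')"
  by (cases Z) (simp add: RHz_fun RH_mult RHz_def)

lemma crossR_z: "cm B x' (\<lambda>a a3. cm B a (\<lambda>a1 a2. cm H y (\<lambda>c c3. cm H c (\<lambda>c1 c2.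
      p a1 c1 * q a3 c3 * cmv CD M (\<lambda>Z1 Z2. RBz Z2 a2 * RHz Z1 c2)))))
   = cmv CD M (\<lambda>Z1 Z2. RHz Z2 y * RBz Z1 x')"
  by (cases M) (simp add: RBz_def RHz_def crossR)

lemma sD_mult2: "mu (gen_double B H p q) X Y (\<lambda>W. sD Z W) = cmv CD Z (\<lambda>Z1 Z2. sD Z2 X * sD Z1 Y)"
proof -
  obtain x y where X: "X = (x,y)" by (cases X)
  obtain x' y' where Y: "Y = (x',y')" by (cases Y)
  note sw = cm_cm_swap[of "comult B" _ CD] cm_cm_swap[of "comult H" _ CD] swHB
  note cD = coalg_tens[OF coalg_bialg[OF bB] coalg_bialg[OF bH]]
  note a4 = coalg.A4[OF cD] coalg.swap_split[OF cD]
  note mus = cm_mu_swap[symmetric]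
  have sDf: "(\<lambda>W. sD Z W) = (\<lambda>(e,g). cmv CD Z (\<lambda>Z1 Z2. RBz Z2 e * RHz Z1 g))"
    by (rule ext) (auto simp: sD_R)
  have "mu (gen_double B H p q) X Y (\<lambda>W. sD Z W) = cmv CD Z (\<lambda>Zc R. cmv CD R (\<lambda>M Zb. RBz Zb x * RHz Zc y' *
      cm B x' (\<lambda>a a3. cm B a (\<lambda>a1 a2. cm H y (\<lambda>c c3. cm H c (\<lambda>c1 c2.
      p a1 c1 * q a3 c3 * cmv CD M (\<lambda>Z1 Z2. RBz Z2 a2 * RHz Z1 c2)))))))"
    unfolding sDf
    by (simp add: X Y D_mult mus RBz_mult RHz_mult,
       (simp only: cm_inR sw)?, (simp only: cm_inL sw a4 mult.assoc mult.commute mult.left_commute)?)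
  also have "\<dots> = cmv CD Z (\<lambda>Zc R. cmv CD R (\<lambda>M Zb. RBz Zb x * RHz Zc y' *
      cmv CD M (\<lambda>Z1 Z2. RHz Z2 y * RBz Z1 x')))"
    by (simp only: crossR_z)
  also have "\<dots> = cmv CD Z (\<lambda>Z1 Z2. sD Z2 X * sD Z1 Y)"
    unfolding X Y sD_R
    by ((simp only: cm_inR sw)?, (simp only: cm_inL sw a4 mult.assoc mult.commute mult.left_commute)?)
  finally show ?thesis .
qed

end

context dd
begin

definition "eCD = (\<lambda>(x,y). counit B x * counit H y)"
abbreviation "CC \<equiv> tensV CD CD"
definition "eC = (\<lambda>(X,Y). eCD X * eCD Y)"

lemma coalgCD: "coalg CD eCD"
  unfolding eCD_def by (intro coalg_tens coalg_bialg bB bH)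

lemma coalgCC: "coalg CC eC"
proof -
  have "coalg CC (\<lambda>(X,Y). eCD X * eCD Y)" by (intro coalg_tens coalgCD)
  then show ?thesis by (simp add: eC_def)
qed

lemma eC_simp [simp]: "eC ((x,y),(x',y')) = counit B x * counit H y * (counit B x' * counit H y')"
  by (simp add: eC_def eCD_def)

definition "Lx'y g = (\<lambda>((x::'b,y::'c),(x'::'b,y'::'c)). g x' y * (counit B x * counit H y'))"
definition "Lxy' g = (\<lambda>((x::'b,y::'c),(x'::'b,y'::'c)). g x y' * (counit H y * counit B x'))"
definition "Lxx' g = (\<lambda>((x::'b,y::'c),(x'::'b,y'::'c)). g x x' * (counit H y * counit H y'))"
definition "Lyy' g = (\<lambda>((x::'b,y::'c),(x'::'b,y'::'c)). g y y' * (counit B x * counit B x'))"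

lemma Lx'y_left: "convf CC (Lx'y g) F ((x,y),(x',y')) = cm B x' (\<lambda>a b. cm H y (\<lambda>c d. g a c * F ((x,d),(b,y'))))"
proof -
  note sw = swHB
  have "convf CC (Lx'y g) F ((x,y),(x',y')) = cm B x (\<lambda>x1 x2. counit B x1 * cm H y (\<lambda>y1 y2. cm B x' (\<lambda>x'1 x'2. cm H y' (\<lambda>y'1 y'2. counit H y'1 * (g x'1 y1 * F((x2,y2),(x'2,y'2)))))))"
    unfolding convf_def Lx'y_def
    by (simp only: cmv_tensV case_prod_conv, (simp only: cm_inR sw)?, (simp only: cm_inL sw mult.assoc mult.commute mult.left_commute)?)
  also have "\<dots> = cm H y (\<lambda>y1 y2. cm B x' (\<lambda>x'1 x'2. g x'1 y1 * F((x,y2),(x'2,y'))))"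
    using bB bH by (simp only: counitL)
  also have "\<dots> = cm B x' (\<lambda>a b. cm H y (\<lambda>c d. g a c * F ((x,d),(b,y'))))"
    by (simp only: sw)
  finally show ?thesis .
qed

lemma Lxy'_left: "convf CC (Lxy' g) F ((x,y),(x',y')) = cm B x (\<lambda>a b. cm H y' (\<lambda>c d. g a c * F ((b,y),(x',d))))"
proof -
  note sw = swHB
  have "convf CC (Lxy' g) F ((x,y),(x',y')) = cm H y (\<lambda>y1 y2. counit H y1 * cm H y' (\<lambda>y'1 y'2. cm B x (\<lambda>x1 x2. cm B x' (\<lambda>x'1 x'2. counit B x'1 * (g x1 y'1 * F((x2,y2),(x'2,y'2)))))))"
    unfolding convf_def Lxy'_def
    by (simp only: cmv_tensV case_prod_conv, (simp only: cm_inR sw)?, (simp only: cm_inL sw mult.assoc mult.commute mult.left_commute)?)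
  also have "\<dots> = cm H y' (\<lambda>y'1 y'2. cm B x (\<lambda>x1 x2. g x1 y'1 * F((x2,y),(x',y'2))))"
    using bB bH by (simp only: counitL)
  also have "\<dots> = cm B x (\<lambda>a b. cm H y' (\<lambda>c d. g a c * F ((b,y),(x',d))))"
    by (simp only: sw)
  finally show ?thesis .
qed

lemma Lxx'_left: "convf CC (Lxx' g) F ((x,y),(x',y')) = cm B x (\<lambda>a b. cm B x' (\<lambda>c d. g a c * F ((b,y),(d,y'))))"
proof -
  note sw = swHB
  have "convf CC (Lxx' g) F ((x,y),(x',y')) = cm H y (\<lambda>y1 y2. counit H y1 * cm H y' (\<lambda>y'1 y'2. counit H y'1 * cm B x (\<lambda>x1 x2. cm B x' (\<lambda>x'1 x'2. g x1 x'1 * F((x2,y2),(x'2,y'2))))))"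
    unfolding convf_def Lxx'_def
    by (simp only: cmv_tensV case_prod_conv, (simp only: cm_inR sw)?, (simp only: cm_inL sw mult.assoc mult.commute mult.left_commute)?)
  also have "\<dots> = cm B x (\<lambda>a b. cm B x' (\<lambda>c d. g a c * F ((b,y),(d,y'))))"
    using bB bH by (simp only: counitL)
  finally show ?thesis .
qed

lemma Lyy'_left: "convf CC (Lyy' g) F ((x,y),(x',y')) = cm H y (\<lambda>a b. cm H y' (\<lambda>c d. g a c * F ((x,b),(x',d))))"
proof -
  note sw = swHB
  have "convf CC (Lyy' g) F ((x,y),(x',y')) = cm H y (\<lambda>y1 y2. cm H y' (\<lambda>y'1 y'2. cm B x (\<lambda>x1 x2. counit B x1 * cm B x' (\<lambda>x'1 x'2. counit B x'1 * (g y1 y'1 * F((x2,y2),(x'2,y'2)))))))"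
    unfolding convf_def Lyy'_def
    by (simp only: cmv_tensV case_prod_conv, (simp only: cm_inR sw)?, (simp only: cm_inL sw mult.assoc mult.commute mult.left_commute)?)
  also have "\<dots> = cm H y (\<lambda>a b. cm H y' (\<lambda>c d. g a c * F ((x,b),(x',d))))"
    using bB bH by (simp only: counitL)
  finally show ?thesis .
qed

lemma Lx'y_right: "convf CC F (Lx'y g) ((x,y),(x',y')) = cm B x' (\<lambda>a b. cm H y (\<lambda>c d. F ((x,c),(a,y')) * g b d))"
proof -
  note sw = swHB
  have "convf CC F (Lx'y g) ((x,y),(x',y')) = cm H y (\<lambda>y1 y2. cm H y' (\<lambda>y'1 y'2. cm B x (\<lambda>x1 x2. cm B x' (\<lambda>x'1 x'2. F((x1,y1),(x'1,y'1)) * g x'2 y2) * counit B x2) * counit H y'2))"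
    unfolding convf_def Lx'y_def
    by (simp only: cmv_tensV case_prod_conv, (simp only: cm_inR sw)?, (simp only: cm_inL sw mult.assoc mult.commute mult.left_commute)?)
  also have "\<dots> = cm H y (\<lambda>y1 y2. cm B x' (\<lambda>x'1 x'2. F((x,y1),(x'1,y')) * g x'2 y2))"
    using bB bH by (simp only: counitR)
  also have "\<dots> = cm B x' (\<lambda>a b. cm H y (\<lambda>c d. F ((x,c),(a,y')) * g b d))"
    by (simp only: sw)
  finally show ?thesis .
qed

lemma Lxy'_right: "convf CC F (Lxy' g) ((x,y),(x',y')) = cm B x (\<lambda>a b. cm H y' (\<lambda>c d. F ((a,y),(x',c)) * g b d))"
proof -
  note sw = swHB
  have "convf CC F (Lxy' g) ((x,y),(x',y')) = cm H y (\<lambda>y1 y2. cm H y' (\<lambda>y'1 y'2. cm B x (\<lambda>x1 x2. cm B x' (\<lambda>x'1 x'2. F((x1,y1),(x'1,y'1)) * g x2 y'2 * counit B x'2))) * counit H y2)"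
    unfolding convf_def Lxy'_def
    by (simp only: cmv_tensV case_prod_conv, (simp only: cm_inR sw)?, (simp only: cm_inL sw mult.assoc mult.commute mult.left_commute)?)
  also have "\<dots> = cm H y' (\<lambda>y'1 y'2. cm B x (\<lambda>x1 x2. F((x1,y),(x',y'1)) * g x2 y'2))"
    using bB bH by (simp only: counitR)
  also have "\<dots> = cm B x (\<lambda>a b. cm H y' (\<lambda>c d. F ((a,y),(x',c)) * g b d))"
    by (simp only: sw)
  finally show ?thesis .
qed

lemma Lxx'_right: "convf CC F (Lxx' g) ((x,y),(x',y')) = cm B x (\<lambda>a b. cm B x' (\<lambda>c d. F ((a,y),(c,y')) * g b d))"
proof -
  note sw = swHB
  have "convf CC F (Lxx' g) ((x,y),(x',y')) = cm H y (\<lambda>y1 y2. cm H y' (\<lambda>y'1 y'2. cm B x (\<lambda>x1 x2. cm B x' (\<lambda>x'1 x'2. F((x1,y1),(x'1,y'1)) * g x2 x'2)) * counit H y'2) * counit H y2)"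
    unfolding convf_def Lxx'_def
    by (simp only: cmv_tensV case_prod_conv, (simp only: cm_inR sw)?, (simp only: cm_inL sw mult.assoc mult.commute mult.left_commute)?)
  also have "\<dots> = cm B x (\<lambda>a b. cm B x' (\<lambda>c d. F ((a,y),(c,y')) * g b d))"
    using bB bH by (simp only: counitR)
  finally show ?thesis .
qed

lemma Lyy'_right: "convf CC F (Lyy' g) ((x,y),(x',y')) = cm H y (\<lambda>a b. cm H y' (\<lambda>c d. F ((x,a),(x',c)) * g b d))"
proof -
  note sw = swHB
  have "convf CC F (Lyy' g) ((x,y),(x',y')) = cm H y (\<lambda>y1 y2. cm H y' (\<lambda>y'1 y'2. cm B x (\<lambda>x1 x2. cm B x' (\<lambda>x'1 x'2. F((x1,y1),(x'1,y'1)) * g y2 y'2 * counit B x'2) * counit B x2)))"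
    unfolding convf_def Lyy'_def
    by (simp only: cmv_tensV case_prod_conv, (simp only: cm_inR sw)?, (simp only: cm_inL sw mult.assoc mult.commute mult.left_commute)?)
  also have "\<dots> = cm H y (\<lambda>a b. cm H y' (\<lambda>c d. F ((x,a),(x',c)) * g b d))"
    using bB bH by (simp only: counitR)
  finally show ?thesis .
qed

abbreviation "cv F G \<equiv> convf CC F G"

lemma cv_assoc: "cv (cv f g) h = cv f (cv g h)"
  by (rule ext) (rule coalg.conv_assoc[OF coalgCC])
lemma cv_unitR [simp]: "cv f eC = f"
  by (rule ext) (rule coalg.conv_unitR[OF coalgCC])
lemma cv_unitL [simp]: "cv eC f = f"
  by (rule ext) (rule coalg.conv_unitL[OF coalgCC])
lemma cv_cancel: "cv f g = eC \<Longrightarrow> cv f (cv g h) = h"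
  by (simp add: cv_assoc[symmetric])
lemma cv_comm: "cv f g = cv g' f' \<Longrightarrow> cv f (cv g h) = cv g' (cv f' h)"
  by (simp add: cv_assoc[symmetric])

abbreviation "Pp \<equiv> Lxy' p"
abbreviation "P \<equiv> Lx'y p"
abbreviation "Qq \<equiv> Lx'y q"
abbreviation "Qq' \<equiv> Lxy' q"
abbreviation "SBf \<equiv> Lxx' sB"
abbreviation "TBf \<equiv> Lxx' tB"
abbreviation "SHf \<equiv> Lyy' sH"
abbreviation "THf \<equiv> Lyy' tH"

lemma inv_x'y:
  assumes a: "\<And>x y. cm B x (\<lambda>a b. cm H y (\<lambda>c d. g a c * h b d)) = counit B x * counit H y"
  shows "cv (Lx'y g) (Lx'y h) = eC"
proof (rule ext)
  fix W :: "('b \<times> 'c) \<times> ('b \<times> 'c)"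
  obtain x y x' y' where W: "W = ((x,y),(x',y'))" by (metis prod.exhaust)
  show "cv (Lx'y g) (Lx'y h) W = eC W"
    by (simp only: W Lx'y_left, simp only: Lx'y_def case_prod_conv mult.assoc[symmetric] cm_cR, simp add: a ac_simps)
qed
lemma inv_xy':
  assumes a: "\<And>x y. cm B x (\<lambda>a b. cm H y (\<lambda>c d. g a c * h b d)) = counit B x * counit H y"
  shows "cv (Lxy' g) (Lxy' h) = eC"
proof (rule ext)
  fix W :: "('b \<times> 'c) \<times> ('b \<times> 'c)"
  obtain x y x' y' where W: "W = ((x,y),(x',y'))" by (metis prod.exhaust)
  show "cv (Lxy' g) (Lxy' h) W = eC W"
    by (simp only: W Lxy'_left, simp only: Lxy'_def case_prod_conv mult.assoc[symmetric] cm_cR, simp add: a ac_simps)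
qed
lemma inv_xx':
  assumes a: "\<And>x y. cm B x (\<lambda>a b. cm B y (\<lambda>c d. g a c * h b d)) = counit B x * counit B y"
  shows "cv (Lxx' g) (Lxx' h) = eC"
proof (rule ext)
  fix W :: "('b \<times> 'c) \<times> ('b \<times> 'c)"
  obtain x y x' y' where W: "W = ((x,y),(x',y'))" by (metis prod.exhaust)
  show "cv (Lxx' g) (Lxx' h) W = eC W"
    by (simp only: W Lxx'_left, simp only: Lxx'_def case_prod_conv mult.assoc[symmetric] cm_cR, simp add: a ac_simps)
qed
lemma inv_yy':
  assumes a: "\<And>x y. cm H x (\<lambda>a b. cm H y (\<lambda>c d. g a c * h b d)) = counit H x * counit H y"
  shows "cv (Lyy' g) (Lyy' h) = eC"
proof (rule ext)
  fix W :: "('b \<times> 'c) \<times> ('b \<times> 'c)"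
  obtain x y x' y' where W: "W = ((x,y),(x',y'))" by (metis prod.exhaust)
  show "cv (Lyy' g) (Lyy' h) W = eC W"
    by (simp only: W Lyy'_left, simp only: Lyy'_def case_prod_conv mult.assoc[symmetric] cm_cR, simp add: a ac_simps)
qed

lemma I1: "cv Qq P = eC" "cv P Qq = eC"
  by (rule inv_x'y, rule CI2) (rule inv_x'y, rule CI1)
lemma I2: "cv Qq' Pp = eC" "cv Pp Qq' = eC"
  by (rule inv_xy', rule CI2) (rule inv_xy', rule CI1)
lemma I3: "cv SBf TBf = eC" "cv TBf SBf = eC"
  by (rule inv_xx', rule convinv1[OF ciB]) (rule inv_xx', rule convinv2[OF ciB])
lemma I4: "cv SHf THf = eC" "cv THf SHf = eC"
  by (rule inv_yy', rule convinv1[OF ciH]) (rule inv_yy', rule convinv2[OF ciH])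
lemma I5: "sD X Y = cv Pp (cv SBf (cv SHf Qq)) (X,Y)"
proof -
  obtain x y where X: "X = (x,y)" by (cases X)
  obtain x' y' where Y: "Y = (x',y')" by (cases Y)
  note sw = swHB cm_cm_swap[of "comult B" x' "comult B" x]
  have "cv Pp (cv SBf (cv SHf Qq)) (X,Y) = cm B x (\<lambda>a b. cm H y' (\<lambda>c d. p a c * cm B b (\<lambda>a2 b2. cm B x' (\<lambda>c2 d2.
      cm H y (\<lambda>a3 b3. cm H d (\<lambda>c3 d3. sB a2 c2 * sH a3 c3 * q d2 b3 * counit B b2 * counit H d3))))))"
    unfolding X Y
    by (simp only: Lxy'_left Lxx'_left Lyy'_left Lx'y_def case_prod_conv, ((simp only: cm_inR sw)?, (simp only: cm_inL sw mult.assoc mult.commute mult.left_commute)?))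
  also have "\<dots> = cm B x (\<lambda>a b. cm H y' (\<lambda>c d. p a c * cm B b (\<lambda>a2 b2. cm B x' (\<lambda>c2 d2.
      cm H y (\<lambda>a3 b3. sB a2 c2 * sH a3 d * q d2 b3)) * counit B b2)))"
    using bB bH by simp
  also have "\<dots> = cm B x (\<lambda>a b. cm H y' (\<lambda>c d. p a c * cm B x' (\<lambda>c2 d2.
      cm H y (\<lambda>a3 b3. sB b c2 * sH a3 d * q d2 b3))))"
    using bB bH by (simp only: counitR)
  also have "\<dots> = sD X Y"
    unfolding X Y sD_def LBz_def LHz_def LB_def LH_def
    by (simp only: cmv_tensV fst_conv snd_conv, ((simp only: cm_inR sw)?, (simp only: cm_inL sw mult.assoc mult.commute mult.left_commute)?))
  finally show ?thesis by simp
qed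

definition "Nf f = (\<lambda>((x,y),(x',y')). mu B x x' (\<lambda>e. mu H y y' (\<lambda>g. f (e,g))))"
definition "N'f f = (\<lambda>((x,y),(x',y')). mu B x x' (\<lambda>e. mu H y' y (\<lambda>g. f (e,g))))"
definition "Nop f = (\<lambda>((x,y),(x',y')). mu B x' x (\<lambda>e. mu H y' y (\<lambda>g. f (e,g))))"

lemma I6: "mu (gen_double B H p q) X Y f = cv P (cv (Nf f) Qq) (X,Y)"
proof -
  obtain x y where X: "X = (x,y)" by (cases X)
  obtain x' y' where Y: "Y = (x',y')" by (cases Y)
  note sw = swHB coassoc[OF bB] coassoc[OF bH]
  show ?thesis
    unfolding X Y D_mult
    by (simp only: Lx'y_left Lx'y_right Nf_def case_prod_conv, ((simp only: cm_inR sw)?, (simp only: cm_inL sw mult.assoc mult.commute mult.left_commute)?))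
qed

lemma I6': "mu (gen_double B H p q) Y X f = cv Pp (cv (Nop f) Qq') (X,Y)"
proof -
  obtain x y where X: "X = (x,y)" by (cases X)
  obtain x' y' where Y: "Y = (x',y')" by (cases Y)
  note sw = swHB coassoc[OF bB] coassoc[OF bH]
  show ?thesis
    unfolding X Y D_mult
    by (simp only: Lxy'_left Lxy'_right Nop_def case_prod_conv, ((simp only: cm_inR sw)?, (simp only: cm_inL sw mult.assoc mult.commute mult.left_commute)?))
qed

lemmas muBH = mu_mu_swap[of B _ _ H]

lemma I7a: "cv SHf (Nf f) = cv (N'f f) SHf"
proof (rule ext)
  fix W :: "('b \<times> 'c) \<times> ('b \<times> 'c)"
  obtain x y x' y' where W: "W = ((x,y),(x',y'))" by (metis prod.exhaust)
  have "cv SHf (Nf f) W = cm H y (\<lambda>a b. cm H y' (\<lambda>c d. sH a c * mu H b d (\<lambda>g. mu B x x' (\<lambda>e. f (e,g)))))"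
    by (simp only: W Lyy'_left Nf_def case_prod_conv muBH)
  also have "\<dots> = cm H y (\<lambda>a b. cm H y' (\<lambda>c d. sH b d * mu H c a (\<lambda>g. mu B x x' (\<lambda>e. f (e,g)))))"
    by (rule SH.C4)
  also have "\<dots> = cv (N'f f) SHf W"
    by (simp only: W Lyy'_right N'f_def case_prod_conv muBH mult.commute)
  finally show "cv SHf (Nf f) W = cv (N'f f) SHf W" .
qed

lemma I7b: "cv SBf (N'f f) = cv (Nop f) SBf"
proof (rule ext)
  fix W :: "('b \<times> 'c) \<times> ('b \<times> 'c)"
  obtain x y x' y' where W: "W = ((x,y),(x',y'))" by (metis prod.exhaust)
  have "cv SBf (N'f f) W = cm B x (\<lambda>a b. cm B x' (\<lambda>c d. sB a c * mu B b d (\<lambda>e. mu H y' y (\<lambda>g. f (e,g)))))"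
    by (simp only: W Lxx'_left N'f_def case_prod_conv)
  also have "\<dots> = cm B x (\<lambda>a b. cm B x' (\<lambda>c d. sB b d * mu B c a (\<lambda>e. mu H y' y (\<lambda>g. f (e,g)))))"
    by (rule SB.C4)
  also have "\<dots> = cv (Nop f) SBf W"
    by (simp only: W Lxx'_right Nop_def case_prod_conv mult.commute)
  finally show "cv SBf (N'f f) W = cv (Nop f) SBf W" .
qed

end

context dd
begin

definition "tD X Y = cv P (cv THf (cv TBf Qq')) (X,Y)"

lemma sD_fun: "(\<lambda>(X,Y). sD X Y) = cv Pp (cv SBf (cv SHf Qq))"
  by (rule ext) (auto simp: I5)
lemma tD_fun: "(\<lambda>(X,Y). tD X Y) = cv P (cv THf (cv TBf Qq'))"
  by (rule ext) (auto simp: tD_def)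

lemma conv_D: "conv (gen_double B H p q) (gen_double B H p q) s t X Y = cv (\<lambda>(X,Y). s X Y) (\<lambda>(X,Y). t X Y) (X,Y)"
  by (simp only: convf_def cmv_tensV case_prod_conv) (simp add: conv_def D_comult cmv_def case_prod_unfold)

lemma conv_inv_D: "conv_inverse (gen_double B H p q) (gen_double B H p q) sD tD"
proof -
  have 1: "cv (\<lambda>(X,Y). sD X Y) (\<lambda>(X,Y). tD X Y) = eC"
    unfolding sD_fun tD_fun
    by (simp add: cv_assoc cv_cancel[OF I1(1)] cv_cancel[OF I4(1)] cv_cancel[OF I3(1)] I2(2))
  have 2: "cv (\<lambda>(X,Y). tD X Y) (\<lambda>(X,Y). sD X Y) = eC"
    unfolding sD_fun tD_fun
    by (simp add: cv_assoc cv_cancel[OF I2(1)] cv_cancel[OF I3(2)] cv_cancel[OF I4(2)] I1(2))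
  show ?thesis
    unfolding conv_inverse_def conv_D 1 2
    by (auto simp: eC_def eCD_def D_counit)
qed

lemma braid_cv: "cv (\<lambda>(X,Y). sD X Y) (\<lambda>(X,Y). mu (gen_double B H p q) X Y f) =
                 cv (\<lambda>(X,Y). mu (gen_double B H p q) Y X f) (\<lambda>(X,Y). sD X Y)"
proof -
  have m1: "(\<lambda>(X,Y). mu (gen_double B H p q) X Y f) = cv P (cv (Nf f) Qq)"
    by (rule ext) (auto simp: I6)
  have m2: "(\<lambda>(X,Y). mu (gen_double B H p q) Y X f) = cv Pp (cv (Nop f) Qq')"
    by (rule ext) (auto simp: I6')
  show ?thesis
    unfolding sD_fun m1 m2
    by (simp add: cv_assoc cv_cancel[OF I1(1)] cv_comm[OF I7a] cv_comm[OF I7b] cv_cancel[OF I2(1)])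
qed

lemma cv_pair: "cv F G (X,Y) = cmv CD X (\<lambda>a b. cmv CD Y (\<lambda>c d. F (a,c) * G (b,d)))"
  by (simp only: convf_def cmv_tensV)

lemma braid_D: "lext (\<lambda>((a,b),(c,d)). smult (sD a c) (mult (gen_double B H p q) b d)) (tens (comult (gen_double B H p q) h) (comult (gen_double B H p q) h'))
   = lext (\<lambda>((a,b),(c,d)). smult (sD b d) (mult (gen_double B H p q) c a)) (tens (comult (gen_double B H p q) h) (comult (gen_double B H p q) h'))"
proof (rule vec_eqI)
  fix f
  have "lfun f (lext (\<lambda>((a,b),(c,d)). smult (sD a c) (mult (gen_double B H p q) b d)) (tens (comult (gen_double B H p q) h) (comult (gen_double B H p q) h')))
     = cv (\<lambda>(X,Y). sD X Y) (\<lambda>(X,Y). mu (gen_double B H p q) X Y f) (h,h')"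
    by (simp add: cv_pair D_comult cmv_def mu_def case_prod_unfold)
  also have "\<dots> = cv (\<lambda>(X,Y). mu (gen_double B H p q) Y X f) (\<lambda>(X,Y). sD X Y) (h,h')"
    by (simp only: braid_cv)
  also have "\<dots> = lfun f (lext (\<lambda>((a,b),(c,d)). smult (sD b d) (mult (gen_double B H p q) c a)) (tens (comult (gen_double B H p q) h) (comult (gen_double B H p q) h')))"
    by (simp add: cv_pair D_comult cmv_def mu_def case_prod_unfold mult.commute)
  finally show "lfun f (lext (\<lambda>((a,b),(c,d)). smult (sD a c) (mult (gen_double B H p q) b d)) (tens (comult (gen_double B H p q) h) (comult (gen_double B H p q) h')))
     = lfun f (lext (\<lambda>((a,b),(c,d)). smult (sD b d) (mult (gen_double B H p q) c a)) (tens (comult (gen_double B H p q) h) (comult (gen_double B H p q) h')))" .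
qed

lemma un_LB: "un B (LB u v) = counit B u * counit H v"
  using bB by (simp add: LB_fun comult_one)
lemma un_LH: "un H (LH u v) = counit B u * counit H v"
  using bH by (simp add: LH_fun comult_one cm_un_swap[symmetric])

lemma un_sD1: "un (gen_double B H p q) (\<lambda>a. sD a h) = counit (gen_double B H p q) h"
proof -
  obtain u v where h: "h = (u,v)" by (cases h)
  have "un (gen_double B H p q) (\<lambda>a. sD a h) = cm B u (\<lambda>u1 u2. cm H v (\<lambda>v1 v2. un B (LB u1 v1) * un H (LH u2 v2)))"
    by (simp add: h D_one sD_def LBz_fun LHz_fun cm_un_swap[symmetric])
  also have "\<dots> = counit (gen_double B H p q) h"
    using bB bH by (simp add: un_LB un_LH h D_counit mult.assoc[symmetric])
  finally show ?thesis .
qed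

lemma D_comult_one: "un (gen_double B H p q) (\<lambda>W. cmv CD W F) = un (gen_double B H p q) (\<lambda>W1. un (gen_double B H p q) (\<lambda>W2. F W1 W2))"
proof -
  have "un (gen_double B H p q) (\<lambda>W. cmv CD W F) = un B (\<lambda>a. un H (\<lambda>b. cm B a (\<lambda>a1 a2. cm H b (\<lambda>b1 b2. F (a1,b1) (a2,b2)))))"
    by (simp add: D_one)
  also have "\<dots> = un B (\<lambda>a. cm B a (\<lambda>a1 a2. un H (\<lambda>b. cm H b (\<lambda>b1 b2. F (a1,b1) (a2,b2)))))"
    by (simp only: cm_un_swap)
  also have "\<dots> = un B (\<lambda>a1. un B (\<lambda>a2. un H (\<lambda>b1. un H (\<lambda>b2. F (a1,b1) (a2,b2)))))"
    using bB bH by (simp add: comult_one)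
  also have "\<dots> = un (gen_double B H p q) (\<lambda>W1. un (gen_double B H p q) (\<lambda>W2. F W1 W2))"
    by (simp add: D_one un_un_swap[of H B])
  finally show ?thesis .
qed

lemma un_sD2: "un (gen_double B H p q) (\<lambda>c. sD h c) = counit (gen_double B H p q) h"
proof -
  obtain x y where h: "h = (x,y)" by (cases h)
  have "un (gen_double B H p q) (\<lambda>c. sD h c) = un (gen_double B H p q) (\<lambda>W1. LBz W1 x) * un (gen_double B H p q) (\<lambda>W2. LHz W2 y)"
    by (simp add: h sD_def D_comult_one)
  also have "\<dots> = counit (gen_double B H p q) h"
    using bB bH by (simp add: h D_one D_counit LBz_def LHz_def LB_def LH_def cm_un_swap[symmetric])
  finally show ?thesis .
qed

theorem cqt_D: "cqt_form (gen_double B H p q) sD"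
  unfolding cqt_form_def conv_invertible_def
proof (intro conjI allI exI)
  show "conv_inverse (gen_double B H p q) (gen_double B H p q) sD tD" by (rule conv_inv_D)
next
  fix h h' g
  show "lfun (\<lambda>a. sD a g) (mult (gen_double B H p q) h h') = lfun (\<lambda>(c, d). sD h c * sD h' d) (comult (gen_double B H p q) g)"
    using sD_mult1[of h h' g] by (simp add: mu_def cmv_def D_comult)
next
  fix g h h'
  show "lfun (sD g) (mult (gen_double B H p q) h h') = lfun (\<lambda>(a, b). sD b h * sD a h') (comult (gen_double B H p q) g)"
    using sD_mult2[of h h' g] by (simp add: mu_def cmv_def D_comult)
next
  fix h
  show "lfun (\<lambda>a. sD a h) (one (gen_double B H p q)) = counit (gen_double B H p q) h"
    using un_sD1[of h] by (simp add: un_def)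
  show "lfun (sD h) (one (gen_double B H p q)) = counit (gen_double B H p q) h"
    using un_sD2[of h] by (simp add: un_def)
next
  fix h h'
  show "lext (\<lambda>((a,b),(c,d)). smult (sD a c) (mult (gen_double B H p q) b d)) (tens (comult (gen_double B H p q) h) (comult (gen_double B H p q) h'))
   = lext (\<lambda>((a,b),(c,d)). smult (sD b d) (mult (gen_double B H p q) c a)) (tens (comult (gen_double B H p q) h) (comult (gen_double B H p q) h'))"
    by (rule braid_D)
qed

end

locale dd1 = pq B H p q for B :: "('b,'k::field) bialg" and H :: "('c,'k) bialg" and p q +
  fixes s :: "'b \<times> 'c \<Rightarrow> 'b \<times> 'c \<Rightarrow> 'k"
  assumes cqs: "cqt_form (gen_double B H p q) s"
begin

abbreviation "DD \<equiv> gen_double B H p q"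

sublocale SD: cqt DD s by (rule cqt.intro, rule cqs)

lemma restrB_mult: "un H (\<lambda>k1. un H (\<lambda>k2. mu DD (h,k1) (h',k2) f)) = mu B h h' (\<lambda>e. un H (\<lambda>g. f (e,g)))"
  using bB bH by (simp add: D_mult comult_one cm_un_swap[symmetric] mu_un_swap[symmetric] mult.assoc)

lemma restrH_mult: "un B (\<lambda>a1. un B (\<lambda>a2. mu DD (a1,y) (a2,y') f)) = mu H y y' (\<lambda>g. un B (\<lambda>e. f (e,g)))"
  using bB bH by (simp add: D_mult comult_one cm_un_swap[symmetric] mu_un_swap[symmetric] mult.assoc)

definition "sBr x x' = un H (\<lambda>k. un H (\<lambda>k'. s (x,k) (x',k')))"
definition "sHr y y' = un B (\<lambda>a. un B (\<lambda>a'. s (a,y) (a',y')))"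
definition "rB t x x' = un H (\<lambda>k. un H (\<lambda>k'. t (x,k) (x',k')))"
definition "rH t y y' = un B (\<lambda>a. un B (\<lambda>a'. t (a,y) (a',y')))"

lemma conv_DD: "conv DD DD f g (x,y) (x',y') = cm B x (\<lambda>a b. cm H y (\<lambda>k1 k2. cm B x' (\<lambda>c d. cm H y' (\<lambda>k1' k2'. f (a,k1) (c,k1') * g (b,k2) (d,k2')))))"
  by (simp add: conv_def D_comult tensV_def cmv_def case_prod_unfold)

lemma conv_cm: "conv A C f g x y = cm A x (\<lambda>a b. cm C y (\<lambda>c d. f a c * g b d))"
  by (simp add: conv_def cm_def case_prod_unfold)

lemma B_conv: "conv_inverse DD DD s t \<Longrightarrow> conv_inverse B B sBr (rB t)"
  unfolding conv_inverse_def
proof (intro allI conjI)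
  fix x x'
  assume ci: "\<forall>x y. conv DD DD s t x y = counit DD x * counit DD y \<and> conv DD DD t s x y = counit DD x * counit DD y"
  have "conv B B sBr (rB t) x x' = un H (\<lambda>k. un H (\<lambda>k'. conv DD DD s t (x,k) (x',k')))"
    using bH by (simp only: conv_DD, simp only: conv_cm, simp add: sBr_def rB_def comult_one cm_un_swap[symmetric])
  also have "\<dots> = counit B x * counit B x'"
    using ci bH by (simp add: D_counit)
  finally show "conv B B sBr (rB t) x x' = counit B x * counit B x'" .
  have "conv B B (rB t) sBr x x' = un H (\<lambda>k. un H (\<lambda>k'. conv DD DD t s (x,k) (x',k')))"
    using bH by (simp only: conv_DD, simp only: conv_cm, simp add: sBr_def rB_def comult_one cm_un_swap[symmetric])
  also have "\<dots> = counit B x * counit B x'"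
    using ci bH by (simp add: D_counit)
  finally show "conv B B (rB t) sBr x x' = counit B x * counit B x'" .
qed

lemma restrB_mult': "mu B h h' (\<lambda>e. un H (\<lambda>g. f e g)) = un H (\<lambda>k1. un H (\<lambda>k2. mu DD (h,k1) (h',k2) (\<lambda>W. f (fst W) (snd W))))"
  using restrB_mult[of h h' "\<lambda>W. f (fst W) (snd W)"] by simp
lemma restrH_mult': "mu H y y' (\<lambda>g. un B (\<lambda>e. f e g)) = un B (\<lambda>a1. un B (\<lambda>a2. mu DD (a1,y) (a2,y') (\<lambda>W. f (fst W) (snd W))))"
  using restrH_mult[of y y' "\<lambda>W. f (fst W) (snd W)"] by simp

lemma cmDD: "cm DD (x,y) F = cm B x (\<lambda>a b. cm H y (\<lambda>c d. F (a,c) (b,d)))"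
  by (simp add: D_comult)

lemma sBr_C1: "mu B h h' (\<lambda>a. sBr a g) = cm B g (\<lambda>c d. sBr h c * sBr h' d)"
proof -
  have "mu B h h' (\<lambda>a. sBr a g) = un H (\<lambda>k1. un H (\<lambda>k2. un H (\<lambda>k'. mu DD (h,k1) (h',k2) (\<lambda>W. s W (g,k')))))"
    unfolding sBr_def by (simp only: restrB_mult' prod.collapse, simp only: mu_un_swap)
  also have "\<dots> = un H (\<lambda>k1. un H (\<lambda>k2. un H (\<lambda>k'. cm DD (g,k') (\<lambda>c d. s (h,k1) c * s (h',k2) d))))"
    by (simp only: SD.C1)
  also have "\<dots> = cm B g (\<lambda>c d. sBr h c * sBr h' d)"
    using bH by (simp add: cmDD sBr_def comult_one cm_un_swap[symmetric])
  finally show ?thesis .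
qed

lemma sBr_alt: "sBr x x' = un H (\<lambda>k'. un H (\<lambda>k. s (x,k) (x',k')))"
  unfolding sBr_def by (rule un_un_swap)

lemma sBr_C2: "mu B h h' (\<lambda>c. sBr g c) = cm B g (\<lambda>a b. sBr b h * sBr a h')"
proof -
  have "mu B h h' (\<lambda>c. sBr g c) = un H (\<lambda>k1. un H (\<lambda>k2. un H (\<lambda>k. mu DD (h,k1) (h',k2) (\<lambda>W. s (g,k) W))))"
    unfolding sBr_alt by (simp only: restrB_mult' prod.collapse, simp only: mu_un_swap)
  also have "\<dots> = un H (\<lambda>k1. un H (\<lambda>k2. un H (\<lambda>k. cm DD (g,k) (\<lambda>a b. s b (h,k1) * s a (h',k2)))))"
    by (simp only: SD.C2)
  also have "\<dots> = cm B g (\<lambda>a b. sBr b h * sBr a h')"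
    using bH by (simp add: cmDD sBr_alt comult_one cm_un_swap[symmetric])
  finally show ?thesis .
qed

lemma restrB_mult2: "un H (\<lambda>k2. un H (\<lambda>k1. mu DD (h,k1) (h',k2) f)) = mu B h h' (\<lambda>e. un H (\<lambda>g. f (e,g)))"
  by (subst un_un_swap) (rule restrB_mult)

lemma sBr_C3a: "un B (\<lambda>a. sBr a h) = counit B h"
proof -
  have "un B (\<lambda>a. sBr a h) = un H (\<lambda>k'. un DD (\<lambda>W. s W (h,k')))"
    by (simp add: sBr_alt D_one un_un_swap[of B H])
  also have "\<dots> = counit B h"
    using bH by (simp add: SD.C3a D_counit)
  finally show ?thesis .
qed

lemma sBr_C3b: "un B (\<lambda>c. sBr h c) = counit B h"
proof -
  have "un B (\<lambda>c. sBr h c) = un H (\<lambda>k. un DD (\<lambda>W. s (h,k) W))"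
    by (simp add: sBr_def D_one un_un_swap[of B H])
  also have "\<dots> = counit B h"
    using bH by (simp add: SD.C3b D_counit)
  finally show ?thesis .
qed

lemma sBr_C4: "cm B h (\<lambda>a b. cm B h' (\<lambda>c d. sBr a c * mu B b d f)) = cm B h (\<lambda>a b. cm B h' (\<lambda>c d. sBr b d * mu B c a f))"
proof -
  define F where "F = (\<lambda>W. f (fst W) * counit H (snd W))"
  have "un H (\<lambda>k. un H (\<lambda>k'. cm DD (h,k) (\<lambda>A B'. cm DD (h',k') (\<lambda>C D'. s A C * mu DD B' D' F))))
      = un H (\<lambda>k. un H (\<lambda>k'. cm DD (h,k) (\<lambda>A B'. cm DD (h',k') (\<lambda>C D'. s B' D' * mu DD C A F))))"
    by (simp only: SD.C4)
  then show ?thesis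
    using bH by (simp add: cmDD comult_one cm_un_swap[symmetric] restrB_mult restrB_mult2 sBr_def F_def)
qed

theorem cqt_B: "cqt_form B sBr"
proof -
  obtain t where ci: "conv_inverse DD DD s t" using cqs by (auto simp: cqt_form_def conv_invertible_def)
  show ?thesis
    unfolding cqt_form_def conv_invertible_def
  proof (intro conjI allI exI)
    show "conv_inverse B B sBr (rB t)" by (rule B_conv[OF ci])
  next
    fix h h' g
    show "lfun (\<lambda>a. sBr a g) (mult B h h') = lfun (\<lambda>(c, d). sBr h c * sBr h' d) (comult B g)"
      using sBr_C1[of h h' g] by (simp add: mu_def cmv_def)
  next
    fix g h h'
    show "lfun (sBr g) (mult B h h') = lfun (\<lambda>(a, b). sBr b h * sBr a h') (comult B g)"
      using sBr_C2[of h h' g] by (simp add: mu_def cmv_def)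
  next
    fix h
    show "lfun (\<lambda>a. sBr a h) (one B) = counit B h"
      using sBr_C3a[of h] by (simp add: un_def)
    show "lfun (sBr h) (one B) = counit B h"
      using sBr_C3b[of h] by (simp add: un_def)
  next
    fix h h'
    show "lext (\<lambda>((a,b),(c,d)). smult (sBr a c) (mult B b d)) (tens (comult B h) (comult B h'))
     = lext (\<lambda>((a,b),(c,d)). smult (sBr b d) (mult B c a)) (tens (comult B h) (comult B h'))"
    proof (rule vec_eqI)
      fix f
      show "lfun f (lext (\<lambda>((a,b),(c,d)). smult (sBr a c) (mult B b d)) (tens (comult B h) (comult B h')))
          = lfun f (lext (\<lambda>((a,b),(c,d)). smult (sBr b d) (mult B c a)) (tens (comult B h) (comult B h')))"
        using sBr_C4[of h h' f] by (simp add: cmv_def mu_def case_prod_unfold)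
    qed
  qed
qed

lemma sHr_alt: "sHr y y' = un B (\<lambda>a'. un B (\<lambda>a. s (a,y) (a',y')))"
  unfolding sHr_def by (rule un_un_swap)

lemma restrH_mult2: "un B (\<lambda>a2. un B (\<lambda>a1. mu DD (a1,y) (a2,y') f)) = mu H y y' (\<lambda>g. un B (\<lambda>e. f (e,g)))"
  by (subst un_un_swap) (rule restrH_mult)

lemma H_conv: "conv_inverse DD DD s t \<Longrightarrow> conv_inverse H H sHr (rH t)"
  unfolding conv_inverse_def
proof (intro allI conjI)
  fix y y'
  assume ci: "\<forall>x y. conv DD DD s t x y = counit DD x * counit DD y \<and> conv DD DD t s x y = counit DD x * counit DD y"
  have "conv H H sHr (rH t) y y' = un B (\<lambda>a. un B (\<lambda>a'. conv DD DD s t (a,y) (a',y')))"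
    using bB by (simp only: conv_DD, simp only: conv_cm, simp add: sHr_def rH_def comult_one cm_un_swap[symmetric])
  also have "\<dots> = counit H y * counit H y'"
    using ci bB by (simp add: D_counit)
  finally show "conv H H sHr (rH t) y y' = counit H y * counit H y'" .
  have "conv H H (rH t) sHr y y' = un B (\<lambda>a. un B (\<lambda>a'. conv DD DD t s (a,y) (a',y')))"
    using bB by (simp only: conv_DD, simp only: conv_cm, simp add: sHr_def rH_def comult_one cm_un_swap[symmetric])
  also have "\<dots> = counit H y * counit H y'"
    using ci bB by (simp add: D_counit)
  finally show "conv H H (rH t) sHr y y' = counit H y * counit H y'" .
qed

lemma sHr_C1: "mu H h h' (\<lambda>a. sHr a g) = cm H g (\<lambda>c d. sHr h c * sHr h' d)"
proof -
  have "mu H h h' (\<lambda>a. sHr a g) = un B (\<lambda>k1. un B (\<lambda>k2. un B (\<lambda>k'. mu DD (k1,h) (k2,h') (\<lambda>W. s W (k',g)))))"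
    unfolding sHr_def by (simp only: restrH_mult' prod.collapse, simp only: mu_un_swap)
  also have "\<dots> = un B (\<lambda>k1. un B (\<lambda>k2. un B (\<lambda>k'. cm DD (k',g) (\<lambda>c d. s (k1,h) c * s (k2,h') d))))"
    by (simp only: SD.C1)
  also have "\<dots> = cm H g (\<lambda>c d. sHr h c * sHr h' d)"
    using bB by (simp add: cmDD sHr_def comult_one cm_un_swap[symmetric])
  finally show ?thesis .
qed

lemma sHr_C2: "mu H h h' (\<lambda>c. sHr g c) = cm H g (\<lambda>a b. sHr b h * sHr a h')"
proof -
  have "mu H h h' (\<lambda>c. sHr g c) = un B (\<lambda>k1. un B (\<lambda>k2. un B (\<lambda>k. mu DD (k1,h) (k2,h') (\<lambda>W. s (k,g) W))))"
    unfolding sHr_alt by (simp only: restrH_mult' prod.collapse, simp only: mu_un_swap)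
  also have "\<dots> = un B (\<lambda>k1. un B (\<lambda>k2. un B (\<lambda>k. cm DD (k,g) (\<lambda>a b. s b (k1,h) * s a (k2,h')))))"
    by (simp only: SD.C2)
  also have "\<dots> = cm H g (\<lambda>a b. sHr b h * sHr a h')"
    using bB by (simp add: cmDD sHr_alt comult_one cm_un_swap[symmetric])
  finally show ?thesis .
qed

lemma sHr_C3a: "un H (\<lambda>a. sHr a h) = counit H h"
proof -
  have "un H (\<lambda>a. sHr a h) = un B (\<lambda>k'. un DD (\<lambda>W. s W (k',h)))"
    by (simp add: sHr_alt D_one un_un_swap[of H B])
  also have "\<dots> = counit H h"
    using bB by (simp add: SD.C3a D_counit)
  finally show ?thesis .
qed

lemma sHr_C3b: "un H (\<lambda>c. sHr h c) = counit H h"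
proof -
  have "un H (\<lambda>c. sHr h c) = un B (\<lambda>k. un DD (\<lambda>W. s (k,h) W))"
    by (simp add: sHr_def D_one un_un_swap[of H B])
  also have "\<dots> = counit H h"
    using bB by (simp add: SD.C3b D_counit)
  finally show ?thesis .
qed

lemma sHr_C4: "cm H h (\<lambda>a b. cm H h' (\<lambda>c d. sHr a c * mu H b d f)) = cm H h (\<lambda>a b. cm H h' (\<lambda>c d. sHr b d * mu H c a f))"
proof -
  define F where "F = (\<lambda>W. counit B (fst W) * f (snd W))"
  have "un B (\<lambda>k. un B (\<lambda>k'. cm DD (k,h) (\<lambda>A B'. cm DD (k',h') (\<lambda>C D'. s A C * mu DD B' D' F))))
      = un B (\<lambda>k. un B (\<lambda>k'. cm DD (k,h) (\<lambda>A B'. cm DD (k',h') (\<lambda>C D'. s B' D' * mu DD C A F))))"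
    by (simp only: SD.C4)
  then show ?thesis
    using bB by (simp add: cmDD comult_one cm_un_swap[symmetric] restrH_mult restrH_mult2 sHr_def F_def)
qed

theorem cqt_H: "cqt_form H sHr"
proof -
  obtain t where ci: "conv_inverse DD DD s t" using cqs by (auto simp: cqt_form_def conv_invertible_def)
  show ?thesis
    unfolding cqt_form_def conv_invertible_def
  proof (intro conjI allI exI)
    show "conv_inverse H H sHr (rH t)" by (rule H_conv[OF ci])
  next
    fix h h' g
    show "lfun (\<lambda>a. sHr a g) (mult H h h') = lfun (\<lambda>(c, d). sHr h c * sHr h' d) (comult H g)"
      using sHr_C1[of h h' g] by (simp add: mu_def cmv_def)
  next
    fix g h h'
    show "lfun (sHr g) (mult H h h') = lfun (\<lambda>(a, b). sHr b h * sHr a h') (comult H g)"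
      using sHr_C2[of h h' g] by (simp add: mu_def cmv_def)
  next
    fix h
    show "lfun (\<lambda>a. sHr a h) (one H) = counit H h"
      using sHr_C3a[of h] by (simp add: un_def)
    show "lfun (sHr h) (one H) = counit H h"
      using sHr_C3b[of h] by (simp add: un_def)
  next
    fix h h'
    show "lext (\<lambda>((a,b),(c,d)). smult (sHr a c) (mult H b d)) (tens (comult H h) (comult H h'))
     = lext (\<lambda>((a,b),(c,d)). smult (sHr b d) (mult H c a)) (tens (comult H h) (comult H h'))"
    proof (rule vec_eqI)
      fix f
      show "lfun f (lext (\<lambda>((a,b),(c,d)). smult (sHr a c) (mult H b d)) (tens (comult H h) (comult H h')))
          = lfun f (lext (\<lambda>((a,b),(c,d)). smult (sHr b d) (mult H c a)) (tens (comult H h) (comult H h')))"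
        using sHr_C4[of h h' f] by (simp add: cmv_def mu_def case_prod_unfold)
    qed
  qed
qed

end

theorem proposition1p8:
  fixes B :: "('b,'k::field) bialg" and H :: "('c,'k) bialg"
    and p q :: "'b \<Rightarrow> 'c \<Rightarrow> 'k"
  assumes "hopf_algebra B" and "hopf_algebra H"
    and "skew_pairing B H p"
    and "conv_inverse B H p q"
  shows "coquasitriangular (gen_double B H p q) \<longleftrightarrow>
         coquasitriangular B \<and> coquasitriangular H"
proof -
  have bB: "bialgebra B" and bH: "bialgebra H"
    using assms(1,2) by (auto simp: hopf_algebra_def)
  have pqi: "pq B H p q" using bB bH assms(3,4) by (rule pq.intro)
  show ?thesis
  proof
    assume "coquasitriangular (gen_double B H p q)"
    then obtain s where s: "cqt_form (gen_double B H p q) s"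
      by (auto simp: coquasitriangular_def)
    interpret dd1 B H p q s
      using pqi s by (intro dd1.intro dd1_axioms.intro)
    show "coquasitriangular B \<and> coquasitriangular H"
      unfolding coquasitriangular_def using cqt_B cqt_H by blast
  next
    assume "coquasitriangular B \<and> coquasitriangular H"
    then obtain sB sH where sB: "cqt_form B sB" and sH: "cqt_form H sH"
      by (auto simp: coquasitriangular_def)
    obtain tB where tB: "conv_inverse B B sB tB"
      using sB by (auto simp: cqt_form_def conv_invertible_def)
    obtain tH where tH: "conv_inverse H H sH tH"
      using sH by (auto simp: cqt_form_def conv_invertible_def)
    interpret dd B H p q sB sH tB tH
      using pqi sB sH tB tH by (intro dd.intro cqt.intro dd_axioms.intro)
    show "coquasitriangular (gen_double B H p q)"
      unfolding coquasitriangular_def using cqt_D by blast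
  qed
qed


end
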